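(* Let $S=S_1\times\cdots\times S_m\subseteq\mathbb{F}_q^m$ and let $\prec$ be an arbitrary (fixed) monomial ordering on monomials in $X_1,\dots,X_m$. Enumerate $\Delta(s_1,\dots,s_m)=\{N_1,\dots,N_n\}$ so that $N_1\prec N_2\prec\cdots\prec N_n$. Let $L_2\subsetneq L_1\subseteq\Delta(s_1,\dots,s_m)$. Then $C(L_1)$ and $C(L_2)$ have length $n$, $C(L_2)\subsetneq C(L_1)$, and $\dim C(L_1)-\dim C(L_2)=\#L_1-\#L_2$. Moreover, putting $u=\min\{i\mid N_i\in L_1\setminus L_2\}$ and $u^\perp=\max\{i\mid N_i\in L_1\}$, for every $v=1,\dots,\#L_1-\#L_2$: $$M_v(C(L_1),C(L_2))\ \ge\ \min\{D(K)\mid K\subseteq \{N_u,\dots,N_n\}\cap L_1,\ \#K=v\},$$ $$M_v(C(L_2)^\perp,C(L_1)^\perp)\ \ge\ \min\{D^\perp(K)\mid K\subseteq\{N_1,\dots,N_{u^\perp}\}\setminus L_2,\ \#K=v\}.$$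
   Context: $q$ is a prime power. For $i=1,\dots,m$, $S_i\subseteq\mathbb{F}_q$ is nonempty with $s_i=\#S_i$; $S=S_1\times\cdots\times S_m=\{\alpha_1,\dots,\alpha_n\}$ with $n=\prod_i s_i$ (fixed enumeration). $\Delta(s_1,\dots,s_m)=\{X_1^{i_1}\cdots X_m^{i_m}\mid 0\le i_t<s_t,\ t=1,\dots,m\}$. For $L\subseteq\Delta(s_1,\dots,s_m)$, $C(L)\subseteq\mathbb{F}_q^n$ is the $\mathbb{F}_q$-span of the vectors $(N(\alpha_1),\dots,N(\alpha_n))$ for $N\in L$. For a monomial $N=X_1^{i_1}\cdots X_m^{i_m}\in\Delta(s_1,\dots,s_m)$: $D(N)=\prod_{t=1}^m(s_t-i_t)$ and $D^\perp(N)=\prod_{t=1}^m(i_t+1)$; for $K\subseteq\Delta(s_1,\dots,s_m)$: $D(K)=\#\{N\in\Delta(s_1,\dots,s_m)\mid N\text{ is divisible by some }M\in K\}$ and $D^\perp(K)=\#\{N\in\Delta(s_1,\dots,s_m)\mid N\text{ divides some }M\in K\}$. $C^\perp$ denotes the dual with respect to the Euclidean inner product. For linear codes $C_2\subsetneq C_1\subseteq\mathbb{F}_q^n$ and $1\le v\le \dim C_1-\dim C_2$, the relative generalized Hamming weight is $M_v(C_1,C_2)=\min\{\#\mathrm{Supp}\,U\mid U\subseteq C_1 \text{ a subspace},\ \dim U=v,\ U\cap C_2=\{\vec 0\}\}$, where $\mathrm{Supp}\,U$ is the set of coordinate positions in which some codeword of $U$ is nonzero. ($M_1(C_1,C_2)=\min\{w_H(\vec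 c)\mid \vec c\in C_1\setminus C_2\}$.) *)

theory Defs
  imports Complex_Main "HOL-Library.Function_Algebras" "HOL-Library.FuncSet"
begin

definition vscale :: "'a::field \<Rightarrow> (nat \<Rightarrow> 'a) \<Rightarrow> (nat \<Rightarrow> 'a)" where
  "vscale c f = (\<lambda>j. c * f j)"

abbreviation fspan :: "(nat \<Rightarrow> 'a::field) set \<Rightarrow> (nat \<Rightarrow> 'a) set" where
  "fspan \<equiv> module.span vscale"

abbreviation fsubspace :: "(nat \<Rightarrow> 'a::field) set \<Rightarrow> bool" where
  "fsubspace \<equiv> module.subspace vscale"

abbreviation fdim :: "(nat \<Rightarrow> 'a::field) set \<Rightarrow> nat" where
  "fdim \<equiv> vector_space.dim vscale"

definition Vn :: "nat \<Rightarrow> (nat \<Rightarrow> 'a::field) set" where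
  "Vn n = {f. \<forall>j\<ge>n. f j = 0}"

definition dual :: "nat \<Rightarrow> (nat \<Rightarrow> 'a::field) set \<Rightarrow> (nat \<Rightarrow> 'a) set" where
  "dual n C = {c \<in> Vn n. \<forall>x\<in>C. (\<Sum>j<n. c j * x j) = 0}"

definition supp :: "(nat \<Rightarrow> 'a::zero) set \<Rightarrow> nat set" where
  "supp U = {j. \<exists>c\<in>U. c j \<noteq> 0}"

definition RGHW :: "nat \<Rightarrow> nat \<Rightarrow> (nat \<Rightarrow> 'a::field) set \<Rightarrow> (nat \<Rightarrow> 'a) set \<Rightarrow> nat" where
  "RGHW n v C1 C2 = Min {card (supp U) | U. fsubspace U \<and> U \<subseteq> C1 \<and> fdim U = v
                                         \<and> U \<inter> C2 = {0}}"

section \<open>Monomials in X_0..X_(m-1) as exponent vectors\<close>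

definition monoms :: "nat \<Rightarrow> (nat \<Rightarrow> nat) set" where
  "monoms m = {e. \<forall>i\<ge>m. e i = 0}"

definition Delta :: "nat \<Rightarrow> (nat \<Rightarrow> nat) \<Rightarrow> (nat \<Rightarrow> nat) set" where
  "Delta m s = {e. (\<forall>i<m. e i < s i) \<and> (\<forall>i\<ge>m. e i = 0)}"

definition mdvd :: "(nat \<Rightarrow> nat) \<Rightarrow> (nat \<Rightarrow> nat) \<Rightarrow> bool" where
  "mdvd a b \<longleftrightarrow> (\<forall>i. a i \<le> b i)"

definition DK :: "nat \<Rightarrow> (nat \<Rightarrow> nat) \<Rightarrow> (nat \<Rightarrow> nat) set \<Rightarrow> nat" where
  "DK m s K = card {N \<in> Delta m s. \<exists>M\<in>K. mdvd M N}"

definition DKperp :: "nat \<Rightarrow> (nat \<Rightarrow> nat) \<Rightarrow> (nat \<Rightarrow> nat) set \<Rightarrow> nat" where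
  "DKperp m s K = card {N \<in> Delta m s. \<exists>M\<in>K. mdvd N M}"

definition monomial_order :: "nat \<Rightarrow> ((nat \<Rightarrow> nat) \<Rightarrow> (nat \<Rightarrow> nat) \<Rightarrow> bool) \<Rightarrow> bool" where
  "monomial_order m lt \<longleftrightarrow>
     (\<forall>a\<in>monoms m. \<not> lt a a) \<and>
     (\<forall>a\<in>monoms m. \<forall>b\<in>monoms m. \<forall>c\<in>monoms m. lt a b \<longrightarrow> lt b c \<longrightarrow> lt a c) \<and>
     (\<forall>a\<in>monoms m. \<forall>b\<in>monoms m. a \<noteq> b \<longrightarrow> lt a b \<or> lt b a) \<and>
     (\<forall>a\<in>monoms m. a \<noteq> 0 \<longrightarrow> lt 0 a) \<and>
     (\<forall>a\<in>monoms m. \<forall>b\<in>monoms m. \<forall>c\<in>monoms m. lt a b \<longrightarrow> lt (a + c) (b + c))"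

text \<open>Points of S = S_1 x ... x S_m are elements of PiE {..<m} S.\<close>
definition mono_eval :: "nat \<Rightarrow> (nat \<Rightarrow> nat) \<Rightarrow> (nat \<Rightarrow> 'a::field) \<Rightarrow> 'a" where
  "mono_eval m e P = (\<Prod>i<m. P i ^ e i)"

definition evcode :: "nat \<Rightarrow> nat \<Rightarrow> (nat \<Rightarrow> nat \<Rightarrow> 'a::field) \<Rightarrow> (nat \<Rightarrow> nat) set \<Rightarrow> (nat \<Rightarrow> 'a) set" where
  "evcode m n alpha L = fspan ((\<lambda>e. (\<lambda>j. if j < n then mono_eval m e (alpha j) else 0)) ` L)"

end

theory Submission
  imports Defs "HOL-Computational_Algebra.Polynomial"
begin



lemma vscale_vs: "vector_space (vscale :: 'a::field \<Rightarrow> (nat \<Rightarrow> 'a) \<Rightarrow> _)"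
  by unfold_locales (auto simp: vscale_def fun_eq_iff algebra_simps)

interpretation VS: vector_space "vscale :: 'a::field \<Rightarrow> (nat \<Rightarrow> 'a) \<Rightarrow> _"
  by (rule vscale_vs)

lemma vscale_apply: "vscale c f j = c * f j" by (simp add: vscale_def)





lemma univ_red:
  fixes A :: "'a::field set"
  assumes fin: "finite A"
  shows "\<exists>c. \<forall>x\<in>A. x ^ card A = (\<Sum>k<card A. c k * x ^ k)"
proof -
  define p where "p = (\<Prod>a\<in>A. [:-a, 1:])"
  have deg: "degree p = card A" unfolding p_def by (subst degree_prod_sum_eq) auto
  have lc: "coeff p (card A) = 1"
    using lead_coeff_prod[of "\<lambda>a. [:-a,1:]" A] deg unfolding p_def by simp
  have root: "poly p x = 0" if "x \<in> A" for x
    unfolding p_def poly_prod using that fin by (auto intro: prod_zero)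
  show ?thesis
  proof (intro exI[of _ "\<lambda>k. - coeff p k"] ballI)
    fix x assume x: "x \<in> A"
    have "0 = (\<Sum>i\<le>card A. coeff p i * x^i)" using root[OF x] poly_altdef[of p x] deg by simp
    also have "\<dots> = (\<Sum>i<card A. coeff p i * x^i) + x ^ card A"
      by (simp add: lessThan_Suc_atMost[symmetric] lc)
    finally show "x ^ card A = (\<Sum>k<card A. - coeff p k * x ^ k)"
      by (simp add: sum_negf eq_neg_iff_add_eq_0 add.commute)
  qed
qed




lemma sum_fun_apply: "(\<Sum>k\<in>K. f k) (j::'b) = (\<Sum>k\<in>K. f k j)"
  by (induction K rule: infinite_finite_induct) auto

locale evs =
  fixes m n :: nat
    and s :: "nat \<Rightarrow> nat"
    and S :: "nat \<Rightarrow> 'a::{finite,field} set"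
    and alpha :: "nat \<Rightarrow> nat \<Rightarrow> 'a"
    and lt :: "(nat \<Rightarrow> nat) \<Rightarrow> (nat \<Rightarrow> nat) \<Rightarrow> bool"
    and N :: "nat \<Rightarrow> (nat \<Rightarrow> nat)"
  assumes S_ne: "\<forall>i<m. S i \<noteq> {}"
    and s_def: "\<forall>i<m. s i = card (S i)"
    and n_def: "n = (\<Prod>i<m. s i)"
    and alpha_enum: "bij_betw alpha {..<n} (PiE {..<m} S)"
    and mono_ord: "monomial_order m lt"
    and N_enum: "bij_betw N {1..n} (Delta m s)"
    and N_sorted: "\<forall>i\<in>{1..n}. \<forall>j\<in>{1..n}. i < j \<longrightarrow> lt (N i) (N j)"
begin

definition ev :: "(nat \<Rightarrow> nat) \<Rightarrow> nat \<Rightarrow> 'a" where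
  "ev e = (\<lambda>j. if j < n then mono_eval m e (alpha j) else 0)"

definition b :: "nat \<Rightarrow> nat \<Rightarrow> 'a" where "b i = ev (N i)"

lemma alpha_mem: "j < n \<Longrightarrow> i < m \<Longrightarrow> alpha j i \<in> S i"
  using alpha_enum by (auto simp: bij_betw_def PiE_def Pi_def)

lemma ev_mult: "ev a * ev c = ev (a + c)"
  by (auto simp: fun_eq_iff ev_def mono_eval_def power_add prod.distrib)

lemma Delta_monoms: "Delta m s \<subseteq> monoms m"
  by (auto simp: Delta_def monoms_def)

lemma monoms_add: "a \<in> monoms m \<Longrightarrow> c \<in> monoms m \<Longrightarrow> a + c \<in> monoms m"
  by (auto simp: monoms_def)

lemma lt_irrefl: "a \<in> monoms m \<Longrightarrow> \<not> lt a a"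
  using mono_ord by (auto simp: monomial_order_def)

lemma lt_trans: "a \<in> monoms m \<Longrightarrow> c \<in> monoms m \<Longrightarrow> d \<in> monoms m \<Longrightarrow> lt a c \<Longrightarrow> lt c d \<Longrightarrow> lt a d"
  using mono_ord unfolding monomial_order_def by blast

lemma lt_add: "a \<in> monoms m \<Longrightarrow> c \<in> monoms m \<Longrightarrow> d \<in> monoms m \<Longrightarrow> lt a c \<Longrightarrow> lt (a + d) (c + d)"
  using mono_ord unfolding monomial_order_def by blast

lemma ord_div:
  assumes "E1 \<in> monoms m" "E2 \<in> monoms m" "mdvd E1 E2" "E1 \<noteq> E2"
  shows "lt E1 E2"
proof -
  define d where "d = (\<lambda>i. E2 i - E1 i)"
  have dm: "d \<in> monoms m" using assms(2) by (auto simp: d_def monoms_def)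
  have d0: "d \<noteq> 0"
  proof
    assume d: "d = 0"
    have "E2 i \<le> E1 i" for i using fun_cong[OF d, of i] by (simp add: d_def)
    then have "E1 = E2" using assms(3) by (auto simp: mdvd_def fun_eq_iff intro: antisym)
    then show False using assms(4) by simp
  qed
  have "lt 0 d" using mono_ord dm d0 unfolding monomial_order_def by blast
  then have "lt (0 + E1) (d + E1)"
    using lt_add[of 0 d E1] dm assms(1) by (auto simp: monoms_def)
  moreover have "d + E1 = E2" using assms(3) by (auto simp: d_def mdvd_def fun_eq_iff)
  ultimately show ?thesis by simp
qed

lemma N_mem: "k \<in> {1..n} \<Longrightarrow> N k \<in> Delta m s"
  using N_enum by (auto simp: bij_betw_def)

lemma N_monoms: "k \<in> {1..n} \<Longrightarrow> N k \<in> monoms m"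
  using N_mem Delta_monoms by auto

lemma N_inj: "inj_on N {1..n}" using N_enum by (auto simp: bij_betw_def)

lemma N_img: "N ` {1..n} = Delta m s" using N_enum by (auto simp: bij_betw_def)

lemma lt_idx:
  assumes "k \<in> {1..n}" "k' \<in> {1..n}"
  shows "lt (N k) (N k') \<longleftrightarrow> k < k'"
proof
  assume l: "lt (N k) (N k')"
  show "k < k'"
  proof (rule ccontr)
    assume "\<not> k < k'"
    then consider "k = k'" | "k' < k" by linarith
    then show False
    proof cases
      case 1 then show ?thesis using l lt_irrefl N_monoms assms by auto
    next
      case 2 then have "lt (N k') (N k)" using N_sorted assms by auto
      then show ?thesis using l lt_trans[of "N k" "N k'" "N k"] lt_irrefl N_monoms assms by auto
    qed
  qed
next
  assume "k < k'" then show "lt (N k) (N k')" using N_sorted assms by auto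
qed

lemma ev_reduce:
  assumes "E \<in> monoms m"
  shows "ev E \<in> VS.span (ev ` {E' \<in> Delta m s. mdvd E' E})"
  using assms
proof (induction "\<Sum>i<m. E i" arbitrary: E rule: less_induct)
  case less
  show ?case
  proof (cases "E \<in> Delta m s")
    case True
    then show ?thesis by (intro VS.span_base) (auto simp: mdvd_def)
  next
    case False
    then obtain i where i: "i < m" "E i \<ge> s i"
      using less.prems by (auto simp: Delta_def monoms_def not_less)
    have finS: "finite (S i)" by simp
    obtain c where c: "\<forall>x\<in>S i. x ^ s i = (\<Sum>k<s i. c k * x ^ k)"
      using univ_red[OF finS] s_def i(1) by auto
    define E' where "E' k = E(i := E i - s i + k)" for k
    have E'm: "E' k \<in> monoms m" for k using less.prems i(1) by (auto simp: E'_def monoms_def)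
    have sumE: "(\<Sum>i<m. E i) = E i + (\<Sum>i'\<in>{..<m}-{i}. E i')"
      using i(1) by (simp add: sum.remove)
    have sumE': "(\<Sum>i'<m. E' k i') = (E i - s i + k) + (\<Sum>i'\<in>{..<m}-{i}. E i')" for k
      using i(1) by (simp add: sum.remove E'_def)
    have eq: "ev E = (\<Sum>k<s i. vscale (c k) (ev (E' k)))"
    proof (rule ext)
      fix j
      show "ev E j = (\<Sum>k<s i. vscale (c k) (ev (E' k))) j"
      proof (cases "j < n")
        case False then show ?thesis by (simp add: sum_fun_apply ev_def vscale_apply)
      next
        case True
        define P where "P = alpha j"
        have Pi: "P i \<in> S i" using alpha_mem True i(1) by (simp add: P_def)
        define R where "R = (\<Prod>i'\<in>{..<m}-{i}. P i' ^ E i')"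
        have me: "mono_eval m E P = P i ^ E i * R"
          using i(1) by (simp add: mono_eval_def R_def prod.remove)
        have me': "mono_eval m (E' k) P = P i ^ (E i - s i + k) * R" for k
          using i(1) by (simp add: mono_eval_def R_def prod.remove E'_def)
        have "P i ^ E i = P i ^ (E i - s i) * P i ^ s i"
          using i(2) by (simp add: power_add[symmetric])
        also have "\<dots> = (\<Sum>k<s i. c k * P i ^ (E i - s i + k))"
          using c Pi by (simp add: sum_distrib_left power_add mult_ac)
        finally have pe: "P i ^ E i = (\<Sum>k<s i. c k * P i ^ (E i - s i + k))" .
        have "mono_eval m E P = (\<Sum>k<s i. c k * P i ^ (E i - s i + k)) * R" using me pe by simp
        also have "\<dots> = (\<Sum>k<s i. c k * P i ^ (E i - s i + k) * R)" by (rule sum_distrib_right)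
        also have "\<dots> = (\<Sum>k<s i. c k * mono_eval m (E' k) P)" by (simp add: me' mult.assoc)
        finally have "mono_eval m E P = (\<Sum>k<s i. c k * mono_eval m (E' k) P)" .
        then show ?thesis using True by (simp add: sum_fun_apply ev_def P_def vscale_apply)
      qed
    qed
    have "ev (E' k) \<in> VS.span (ev ` {E'' \<in> Delta m s. mdvd E'' E})" if k: "k < s i" for k
    proof -
      have "(\<Sum>i'<m. E' k i') < (\<Sum>i<m. E i)" using sumE sumE' k i(2) by simp
      then have "ev (E' k) \<in> VS.span (ev ` {E'' \<in> Delta m s. mdvd E'' (E' k)})"
        using less.hyps E'm by blast
      moreover have "{E'' \<in> Delta m s. mdvd E'' (E' k)} \<subseteq> {E'' \<in> Delta m s. mdvd E'' E}"
        using k i(2) by (auto simp: mdvd_def E'_def split: if_splits intro: order_trans)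
      ultimately show ?thesis by (meson VS.span_mono image_mono subsetD)
    qed
    then show ?thesis unfolding eq by (intro VS.span_sum VS.span_scale) auto
  qed
qed

end



lemma vscale_mult: "vscale c x * y = vscale c (x * y)"
  by (simp add: fun_eq_iff mult.assoc vscale_apply)

lemma mult_vscale: "x * vscale c y = vscale c (x * y)"
  by (simp add: fun_eq_iff mult.left_commute vscale_apply)

lemma mult_span:
  assumes x: "x \<in> VS.span A" and y: "y \<in> VS.span B"
    and AB: "\<And>a c. a \<in> A \<Longrightarrow> c \<in> B \<Longrightarrow> a * c \<in> VS.span C"
  shows "x * y \<in> VS.span C"
proof -
  have ay: "a * y \<in> VS.span C" if a: "a \<in> A" for a
    using y
  proof (induction rule: VS.span_induct_alt)
    case base
    have "a * (0::nat\<Rightarrow>'a) = 0" by (rule mult_zero_right)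
    then show ?case using VS.span_zero by metis
  next
    case (step c x y)
    have e: "a * (vscale c x + y) = vscale c (a * x) + a * y" by (simp only: distrib_left mult_vscale)
    have "vscale c (a * x) + a * y \<in> VS.span C"
      using AB[OF a step(1)] step(2) by (intro VS.span_add VS.span_scale)
    then show ?case by (simp only: e)
  qed
  show ?thesis using x
  proof (induction rule: VS.span_induct_alt)
    case base
    have "(0::nat\<Rightarrow>'a) * y = 0" by (rule mult_zero_left)
    then show ?case using VS.span_zero by metis
  next
    case (step c x' y')
    have e: "(vscale c x' + y') * y = vscale c (x' * y) + y' * y" by (simp only: distrib_right vscale_mult)
    have "vscale c (x' * y) + y' * y \<in> VS.span C"
      using ay[OF step(1)] step(2) by (intro VS.span_add VS.span_scale)
    then show ?case by (simp only: e)
  qed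
qed

context evs begin

definition W where "W = VS.span (ev ` monoms m)"

lemma W_mult: "x \<in> W \<Longrightarrow> y \<in> W \<Longrightarrow> x * y \<in> W"
  unfolding W_def by (rule mult_span) (auto simp: ev_mult intro!: VS.span_base monoms_add)

lemma ev_zero: "ev 0 j = (if j < n then 1 else 0)"
  by (simp add: ev_def mono_eval_def)

definition unitv :: "nat \<Rightarrow> nat \<Rightarrow> nat" where "unitv i = (\<lambda>k. if k = i then 1 else 0)"

lemma unitv_monoms: "i < m \<Longrightarrow> unitv i \<in> monoms m"
  by (auto simp: unitv_def monoms_def)

lemma prod_unit: "i < m \<Longrightarrow> (\<Prod>i'<m. P i' ^ (if i' = i then 1 else 0)) = (P i :: 'a)"
proof -
  assume i: "i < m"
  have "(\<Prod>i'<m. P i' ^ (if i' = i then 1 else 0)) = (\<Prod>i'<m. if i' = i then P i' else 1)"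
    by (rule prod.cong) auto
  then show ?thesis using i by simp
qed

lemma ev_unitv: "i < m \<Longrightarrow> ev (unitv i) j = (if j < n then alpha j i else 0)"
  by (simp add: ev_def mono_eval_def unitv_def prod_unit)

definition delta :: "nat \<Rightarrow> nat \<Rightarrow> 'a" where "delta j0 = (\<lambda>j. if j = j0 then 1 else 0)"

lemma delta_W:
  assumes j0: "j0 < n"
  shows "delta j0 \<in> W"
proof -
  define I where "I = {(i,a). i < m \<and> a \<in> S i \<and> a \<noteq> alpha j0 i}"
  have finI: "finite I"
    by (rule finite_subset[of _ "{..<m} \<times> UNIV"]) (auto simp: I_def)
  define fac where "fac j p = (alpha j (fst p) - snd p) / (alpha j0 (fst p) - snd p)" for j p
  define g where "g p = vscale (inverse (alpha j0 (fst p) - snd p)) (ev (unitv (fst p)) - vscale (snd p) (ev 0))" for p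
  have gW: "g p \<in> W" if "p \<in> I" for p
  proof -
    have "ev (unitv (fst p)) \<in> W" using that unfolding W_def I_def
      by (intro VS.span_base imageI unitv_monoms) auto
    moreover have "ev 0 \<in> W" unfolding W_def by (intro VS.span_base imageI) (simp add: monoms_def)
    ultimately show ?thesis unfolding g_def W_def by (intro VS.span_scale VS.span_diff) (auto intro: VS.span_scale)
  qed
  have gval: "g p j = (if j < n then fac j p else 0)" if "p \<in> I" for p j
    using that by (auto simp: g_def fac_def ev_unitv ev_zero I_def divide_inverse mult.commute vscale_apply)
  have main0: "finite I' \<Longrightarrow> I' \<subseteq> I \<Longrightarrow> (\<lambda>j. if j < n then \<Prod>p\<in>I'. fac j p else 0) \<in> W" for I'
  proof (induction I' rule: finite_induct)
    case empty
    have "(\<lambda>j. if j < n then \<Prod>p\<in>{}. fac j p else 0) = ev 0" by (simp add: fun_eq_iff ev_zero)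
    then show ?case by (simp add: W_def monoms_def VS.span_base)
  next
    case (insert p F)
    have "(\<lambda>j. if j < n then \<Prod>p\<in>insert p F. fac j p else 0) = g p * (\<lambda>j. if j < n then \<Prod>p\<in>F. fac j p else 0)"
      using insert.hyps insert.prems by (auto simp: fun_eq_iff gval)
    then show ?case using insert W_mult gW by auto
  qed
  have main: "(\<lambda>j. if j < n then \<Prod>p\<in>I. fac j p else 0) \<in> W" using main0[OF finI] by simp
  have "delta j0 = (\<lambda>j. if j < n then \<Prod>p\<in>I. fac j p else 0)"
  proof (rule ext)
    fix j
    show "delta j0 j = (if j < n then \<Prod>p\<in>I. fac j p else 0)"
    proof (cases "j < n")
      case False then show ?thesis using j0 by (auto simp: delta_def)
    next
      case True
      show ?thesis
      proof (cases "j = j0")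
        case True
        have "fac j p = 1" if "p \<in> I" for p using that \<open>j = j0\<close> by (auto simp: fac_def I_def)
        then show ?thesis using True \<open>j < n\<close> by (simp add: delta_def)
      next
        case False
        have "alpha j \<noteq> alpha j0" using alpha_enum True j0 False by (auto simp: bij_betw_def inj_on_def)
        moreover have "alpha j \<in> PiE {..<m} S" "alpha j0 \<in> PiE {..<m} S"
          using alpha_enum True j0 by (auto simp: bij_betw_def)
        ultimately obtain i where i: "i < m" "alpha j i \<noteq> alpha j0 i"
          by (metis PiE_ext lessThan_iff)
        have "(i, alpha j i) \<in> I" using i alpha_mem True by (auto simp: I_def)
        moreover have "fac j (i, alpha j i) = 0" by (simp add: fac_def)
        ultimately have "(\<Prod>p\<in>I. fac j p) = 0" using finI by (intro prod_zero) auto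
        then show ?thesis using False True by (simp add: delta_def)
      qed
    qed
  qed
  then show ?thesis using main by simp
qed

lemma W_sub: "W \<subseteq> VS.span (ev ` Delta m s)"
proof -
  have "ev ` monoms m \<subseteq> VS.span (ev ` Delta m s)"
  proof
    fix x assume "x \<in> ev ` monoms m"
    then obtain E where E: "E \<in> monoms m" "x = ev E" by auto
    have "VS.span (ev ` {E' \<in> Delta m s. mdvd E' E}) \<subseteq> VS.span (ev ` Delta m s)"
      by (intro VS.span_mono) auto
    then show "x \<in> VS.span (ev ` Delta m s)" using ev_reduce[OF E(1)] E(2) by auto
  qed
  then show ?thesis unfolding W_def by (intro VS.span_minimal) auto
qed

lemma Vn_expand: "f \<in> Vn n \<Longrightarrow> f = (\<Sum>j<n. vscale (f j) (delta j))"
proof (rule ext)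
  fix x assume f: "f \<in> Vn n"
  have e: "(\<Sum>j<n. f j * (if x = j then 1 else 0)) = (\<Sum>j<n. if x = j then f x else 0)"
    by (rule sum.cong) auto
  show "f x = (\<Sum>j<n. vscale (f j) (delta j)) x"
  proof (cases "x < n")
    case True
    have "(\<Sum>j<n. vscale (f j) (delta j)) x = (\<Sum>j<n. f j * (if x = j then 1 else 0))"
      by (simp add: sum_fun_apply delta_def vscale_apply)
    also have "\<dots> = (\<Sum>j<n. if x = j then f x else 0)" by (rule e)
    also have "\<dots> = f x" using True by (simp add: sum.delta')
    finally show ?thesis by simp
  next
    case False then show ?thesis using f by (simp add: sum_fun_apply delta_def Vn_def vscale_apply)
  qed
qed

lemma Vn_span: "Vn n \<subseteq> VS.span (ev ` Delta m s)"
proof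
  fix f :: "nat \<Rightarrow> 'a" assume f: "f \<in> Vn n"
  have "delta j \<in> VS.span (ev ` Delta m s)" if "j < n" for j using delta_W[OF that] W_sub by auto
  then show "f \<in> VS.span (ev ` Delta m s)"
    by (subst Vn_expand[OF f]) (auto intro!: VS.span_sum VS.span_scale)
qed

lemma delta_inj': "delta x = delta y \<Longrightarrow> x = y"
proof -
  assume "delta x = delta y"
  then have "delta x x = delta y x" by simp
  then show "x = y" by (simp add: delta_def split: if_splits)
qed

lemma delta_inj: "inj_on delta {..<n}"
proof (rule inj_onI)
  fix x y assume "delta x = delta y"
  then have "delta x x = delta y x" by simp
  then show "x = y" by (simp add: delta_def split: if_splits)
qed

lemma delta_indep: "VS.independent (delta ` A)"
  unfolding VS.independent_explicit_finite_subsets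
proof (intro allI impI ballI)
  fix T u v assume T: "T \<subseteq> delta ` A" "finite T" and sum: "(\<Sum>v\<in>T. vscale (u v) v) = 0" and v: "v \<in> T"
  then obtain j0 where j0: "v = delta j0" by auto
  have "0 = (\<Sum>v\<in>T. vscale (u v) v) j0" using sum by simp
  also have "\<dots> = (\<Sum>x\<in>T. u x * x j0)" by (simp add: sum_fun_apply vscale_apply)
  also have "\<dots> = (\<Sum>x\<in>T. if x = v then u v else 0)"
  proof (rule sum.cong)
    fix x assume "x \<in> T"
    then obtain j where j: "x = delta j" using T by auto
    show "u x * x j0 = (if x = v then u v else 0)"
      using delta_inj'[of j j0] by (auto simp: j j0 delta_def)
  qed simp
  also have "\<dots> = u v" using v T by simp
  finally show "u v = 0" by simp
qed

lemma card_Delta: "card (Delta m s) = n"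
  using bij_betw_same_card[OF N_enum] by simp

lemma finite_Delta: "finite (Delta m s)"
  using N_enum bij_betw_finite by blast

lemma delta_Vn: "delta j \<in> Vn n \<longleftrightarrow> j < n"
  by (auto simp: delta_def Vn_def)

lemma ev_inj: "inj_on ev (Delta m s)" and ev_indep: "VS.independent (ev ` Delta m s)"
proof -
  have sub: "delta ` {..<n} \<subseteq> VS.span (ev ` Delta m s)" using Vn_span delta_Vn by auto
  have cd: "card (delta ` {..<n}) = n" using card_image[OF delta_inj] by simp
  have "n \<le> card (ev ` Delta m s)"
    using VS.independent_span_bound[OF finite_imageI[OF finite_Delta] delta_indep sub] cd by simp
  moreover have "card (ev ` Delta m s) \<le> n" using card_image_le[OF finite_Delta] card_Delta by simp
  ultimately have ce: "card (ev ` Delta m s) = n" by simp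
  then show "inj_on ev (Delta m s)" using eq_card_imp_inj_on[OF finite_Delta] card_Delta by simp
  show "VS.independent (ev ` Delta m s)"
  proof
    assume "VS.dependent (ev ` Delta m s)"
    then obtain a where a: "a \<in> ev ` Delta m s" "a \<in> VS.span (ev ` Delta m s - {a})"
      unfolding VS.dependent_def by blast
    have "VS.span (ev ` Delta m s) = VS.span (ev ` Delta m s - {a})"
      using VS.span_redundant[OF a(2)] a(1) by (simp add: insert_absorb)
    then have sub2: "delta ` {..<n} \<subseteq> VS.span (ev ` Delta m s - {a})" using sub by simp
    have fin: "finite (ev ` Delta m s - {a})" using finite_Delta by simp
    have "n \<le> card (ev ` Delta m s - {a})"
      using VS.independent_span_bound[OF fin delta_indep sub2] cd by simp
    moreover have "card (ev ` Delta m s - {a}) < card (ev ` Delta m s)"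
      by (rule card_Diff1_less) (use a(1) finite_Delta in auto)
    moreover note ce
    ultimately show False by simp
  qed
qed

end



context evs begin

abbreviation BB where "BB \<equiv> ev ` Delta m s"

lemma B_eq: "b ` {1..n} = BB"
  using N_img by (auto simp: b_def image_image[symmetric])

lemma b_inj: "inj_on b {1..n}"
proof (rule inj_onI)
  fix x y assume x: "x \<in> {1..n}" and y: "y \<in> {1..n}" and e: "b x = b y"
  have "N x = N y" using inj_onD[OF ev_inj] e N_mem[OF x] N_mem[OF y] by (simp add: b_def)
  then show "x = y" using inj_onD[OF N_inj] x y by simp
qed

lemma finite_BB: "finite BB" using finite_Delta by simp

lemma b_in_B: "k \<in> {1..n} \<Longrightarrow> b k \<in> VS.span BB"
proof -
  assume "k \<in> {1..n}" then have "b k \<in> b ` {1..n}" by (rule imageI)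
  then have "b k \<in> BB" by (simp only: B_eq)
  then show ?thesis by (rule VS.span_base)
qed

lemma b_indep_sum:
  assumes I: "I \<subseteq> {1..n}" and sum: "(\<Sum>i\<in>I. vscale (a i) (b i)) = 0" and k: "k \<in> I"
  shows "a k = 0"
proof -
  have injI: "inj_on b I" using b_inj I by (rule inj_on_subset)
  define u where "u v = a (the_inv_into I b v)" for v
  have u: "u (b i) = a i" if "i \<in> I" for i using the_inv_into_f_f[OF injI that] by (simp add: u_def)
  have "(\<Sum>v\<in>b ` I. vscale (u v) v) = (\<Sum>i\<in>I. vscale (u (b i)) (b i))"
    using sum.reindex[OF injI, of "\<lambda>v. vscale (u v) v"] by (simp only: comp_def)
  also have "\<dots> = (\<Sum>i\<in>I. vscale (a i) (b i))" by (rule sum.cong) (auto simp: u)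
  finally have "(\<Sum>v\<in>b ` I. vscale (u v) v) = 0" using sum by simp
  moreover have "finite (b ` I)" using I by (meson finite_atLeastAtMost finite_imageI finite_subset)
  moreover have "b ` I \<subseteq> BB" using I B_eq by auto
  ultimately have "u (b k) = 0" using VS.independentD[OF ev_indep] k by blast
  then show ?thesis using u k by simp
qed

definition co :: "(nat \<Rightarrow> 'a) \<Rightarrow> nat \<Rightarrow> 'a" where
  "co c i = VS.representation BB c (b i)"

lemma co_expand: "c \<in> VS.span BB \<Longrightarrow> c = (\<Sum>i\<in>{1..n}. vscale (co c i) (b i))"
proof -
  assume c: "c \<in> VS.span BB"
  have "c = (\<Sum>v\<in>BB. vscale (VS.representation BB c v) v)"
    using VS.sum_representation_eq[OF ev_indep c finite_BB] by simp
  also have "\<dots> = (\<Sum>i\<in>{1..n}. vscale (co c i) (b i))"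
    unfolding B_eq[symmetric] co_def by (rule sum.reindex[OF b_inj, unfolded comp_def])
  finally show ?thesis .
qed

lemma sum_in_span: "(\<Sum>i\<in>{1..n}. vscale (a i) (b i)) \<in> VS.span BB"
  by (intro VS.span_sum VS.span_scale b_in_B) auto

lemma co_unique:
  assumes c: "c = (\<Sum>i\<in>{1..n}. vscale (a i) (b i))" and k: "k \<in> {1..n}"
  shows "co c k = a k"
proof -
  have cB: "c \<in> VS.span BB" using c sum_in_span by simp
  have "(\<Sum>i\<in>{1..n}. vscale (a i - co c i) (b i)) = (\<Sum>i\<in>{1..n}. vscale (a i) (b i)) - (\<Sum>i\<in>{1..n}. vscale (co c i) (b i))"
    by (simp add: sum_subtractf[symmetric] VS.scale_left_diff_distrib)
  also have "\<dots> = 0" using co_expand[OF cB] c by simp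
  finally have "a k - co c k = 0" using b_indep_sum[of "{1..n}" "\<lambda>i. a i - co c i" k] k by simp
  then show ?thesis by simp
qed

lemma co_b: "i \<in> {1..n} \<Longrightarrow> k \<in> {1..n} \<Longrightarrow> co (b i) k = (if k = i then 1 else 0)"
proof -
  assume i: "i \<in> {1..n}" and k: "k \<in> {1..n}"
  have "b i = (\<Sum>j\<in>{1..n}. vscale (if j = i then 1 else 0) (b j))"
    using i by (simp add: if_distrib[of "\<lambda>c. vscale c _"] sum.delta' cong: if_cong)
  from co_unique[OF this k] show ?thesis .
qed

lemma co_zero: "c \<in> VS.span BB \<Longrightarrow> (\<And>k. k \<in> {1..n} \<Longrightarrow> co c k = 0) \<Longrightarrow> c = 0"
  by (subst co_expand) auto

lemma co_diff:
  assumes c: "c \<in> VS.span BB" and d: "d \<in> VS.span BB" and k: "k \<in> {1..n}"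
  shows "co (c - vscale t d) k = co c k - t * co d k"
proof -
  have "c - vscale t d = (\<Sum>i\<in>{1..n}. vscale (co c i) (b i)) - vscale t (\<Sum>i\<in>{1..n}. vscale (co d i) (b i))"
    using co_expand[OF c] co_expand[OF d] by simp
  also have "\<dots> = (\<Sum>i\<in>{1..n}. vscale (co c i) (b i)) - (\<Sum>i\<in>{1..n}. vscale (t * co d i) (b i))"
    by (simp only: VS.scale_sum_right VS.scale_scale)
  also have "\<dots> = (\<Sum>i\<in>{1..n}. vscale (co c i - t * co d i) (b i))"
    by (simp only: sum_subtractf VS.scale_left_diff_distrib)
  finally show ?thesis by (rule co_unique[OF _ k])
qed

lemma span_idx_coeff:
  assumes I: "I \<subseteq> {1..n}" and c: "c \<in> VS.span (b ` I)" and k: "k \<in> {1..n} - I"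
  shows "co c k = 0"
proof -
  have fin: "finite (b ` I)" using I by (meson finite_atLeastAtMost finite_imageI finite_subset)
  obtain u where u: "c = (\<Sum>v\<in>b ` I. vscale (u v) v)"
    using c VS.span_finite[OF fin] by auto
  have injI: "inj_on b I" using b_inj I by (rule inj_on_subset)
  have "c = (\<Sum>i\<in>I. vscale (u (b i)) (b i))" using u sum.reindex[OF injI] by (simp add: comp_def)
  also have "\<dots> = (\<Sum>i\<in>{1..n}. vscale (if i \<in> I then u (b i) else 0) (b i))"
    using I by (intro sum.mono_neutral_cong_left) auto
  finally show ?thesis using co_unique[of c _ k] k by auto
qed

lemma coeff_span_idx:
  assumes c: "c \<in> VS.span BB" and z: "\<And>k. k \<in> {1..n} - I \<Longrightarrow> co c k = 0"
  shows "c \<in> VS.span (b ` I)"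
proof -
  have "vscale (co c i) (b i) \<in> VS.span (b ` I)" if "i \<in> {1..n}" for i
  proof (cases "i \<in> I")
    case True then show ?thesis by (intro VS.span_scale VS.span_base imageI)
  next
    case False then have "co c i = 0" using z that by auto
    then show ?thesis by (simp add: VS.span_zero)
  qed
  then show ?thesis by (subst co_expand[OF c]) (auto intro: VS.span_sum)
qed

definition idx :: "(nat \<Rightarrow> nat) set \<Rightarrow> nat set" where
  "idx L = {k \<in> {1..n}. N k \<in> L}"

lemma N_idx: "L \<subseteq> Delta m s \<Longrightarrow> N ` idx L = L"
proof
  show "N ` idx L \<subseteq> L" by (auto simp: idx_def)
  assume L: "L \<subseteq> Delta m s"
  show "L \<subseteq> N ` idx L"
  proof
    fix x assume x: "x \<in> L"
    then have "x \<in> N ` {1..n}" using L N_img by auto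
    then obtain k where "k \<in> {1..n}" "x = N k" by auto
    then show "x \<in> N ` idx L" using x by (auto simp: idx_def)
  qed
qed

lemma ev_L: "L \<subseteq> Delta m s \<Longrightarrow> ev ` L = b ` idx L"
proof -
  assume L: "L \<subseteq> Delta m s"
  have "b ` idx L = ev ` (N ` idx L)" by (auto simp: b_def)
  then show ?thesis using N_idx[OF L] by simp
qed

lemma card_idx: "L \<subseteq> Delta m s \<Longrightarrow> card (idx L) = card L"
proof -
  assume L: "L \<subseteq> Delta m s"
  have "inj_on N (idx L)" using N_inj by (rule inj_on_subset) (auto simp: idx_def)
  then have "card (N ` idx L) = card (idx L)" by (rule card_image)
  then show ?thesis using N_idx[OF L] by simp
qed

lemma idx_sub: "idx L \<subseteq> {1..n}" by (auto simp: idx_def)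

lemma subspace_Vn: "VS.subspace (Vn n)"
  by (auto simp: VS.subspace_def Vn_def vscale_apply)

lemma ev_Vn: "ev e \<in> Vn n" by (simp add: ev_def Vn_def)

lemma evcode_eq: "evcode m n alpha L = VS.span (ev ` L)"
  by (simp add: evcode_def ev_def)

lemma evcode_Vn: "evcode m n alpha L \<subseteq> Vn n"
  unfolding evcode_eq using ev_Vn subspace_Vn by (intro VS.span_minimal) auto

lemma evcode_B: "L \<subseteq> Delta m s \<Longrightarrow> evcode m n alpha L \<subseteq> VS.span BB"
  unfolding evcode_eq by (intro VS.span_mono image_mono)

lemma dim_evcode: "L \<subseteq> Delta m s \<Longrightarrow> fdim (evcode m n alpha L) = card L"
proof -
  assume L: "L \<subseteq> Delta m s"
  have "VS.independent (ev ` L)" by (rule VS.independent_mono[OF ev_indep]) (use L in auto)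
  then have "fdim (evcode m n alpha L) = card (ev ` L)"
    unfolding evcode_eq by (rule VS.dim_span_eq_card_independent)
  also have "\<dots> = card L" using card_image[OF inj_on_subset[OF ev_inj L]] .
  finally show ?thesis .
qed

lemma evcode_strict:
  assumes L: "L2 \<subset> L1" "L1 \<subseteq> Delta m s"
  shows "evcode m n alpha L2 \<subset> evcode m n alpha L1"
proof
  show sub: "evcode m n alpha L2 \<subseteq> evcode m n alpha L1"
    unfolding evcode_eq using L by (intro VS.span_mono) auto
  obtain e where e: "e \<in> L1" "e \<notin> L2" using L by auto
  have "e \<in> N ` {1..n}" using N_img e L by auto
  then obtain k where k: "k \<in> {1..n}" "N k = e" by auto
  have "b k \<in> evcode m n alpha L1" unfolding evcode_eq b_def using k e by (auto intro: VS.span_base)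
  moreover have "b k \<notin> evcode m n alpha L2"
  proof
    assume "b k \<in> evcode m n alpha L2"
    then have "b k \<in> VS.span (b ` idx L2)" unfolding evcode_eq using ev_L[of L2] L by auto
    then have "co (b k) k = 0" using span_idx_coeff[OF idx_sub] k e by (auto simp: idx_def)
    then show False using co_b[OF k(1) k(1)] by simp
  qed
  ultimately show "evcode m n alpha L2 \<noteq> evcode m n alpha L1" by auto
qed

end



context evs begin

lemma co_0: "k \<in> {1..n} \<Longrightarrow> co 0 k = 0"
proof -
  assume k: "k \<in> {1..n}"
  have "(0::nat\<Rightarrow>'a) = (\<Sum>i\<in>{1..n}. vscale 0 (b i))" by simp
  from co_unique[OF this k] show ?thesis .
qed

definition NZ where "NZ c = {i \<in> {1..n}. co c i \<noteq> 0}"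
definition hi where "hi c = Max (NZ c)"

lemma NZ_fin: "finite (NZ c)" by (simp add: NZ_def)

lemma NZ_ne: "c \<in> VS.span BB \<Longrightarrow> c \<noteq> 0 \<Longrightarrow> NZ c \<noteq> {}"
  using co_zero[of c] by (auto simp: NZ_def)

lemma hi_in: "c \<in> VS.span BB \<Longrightarrow> c \<noteq> 0 \<Longrightarrow> hi c \<in> NZ c"
  unfolding hi_def by (rule Max_in[OF NZ_fin NZ_ne])

lemma hi_max: "c \<in> VS.span BB \<Longrightarrow> i \<in> {1..n} \<Longrightarrow> hi c < i \<Longrightarrow> co c i = 0"
proof (rule ccontr)
  assume i: "i \<in> {1..n}" "hi c < i" "co c i \<noteq> 0"
  then have "i \<in> NZ c" by (simp add: NZ_def)
  then have "i \<le> hi c" unfolding hi_def by (rule Max_ge[OF NZ_fin])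
  then show False using i by simp
qed

definition restr :: "nat set \<Rightarrow> (nat \<Rightarrow> 'a) \<Rightarrow> nat \<Rightarrow> 'a" where
  "restr Z x = (\<lambda>j. if j \<in> Z then x j else 0)"

lemma restr_add: "restr Z (x + y) = restr Z x + restr Z y"
  by (simp add: restr_def fun_eq_iff)

lemma restr_scale: "restr Z (vscale c x) = vscale c (restr Z x)"
  by (simp add: restr_def fun_eq_iff vscale_apply)

lemma restr_0: "restr Z 0 = 0"
  by (simp add: restr_def fun_eq_iff)

lemma restr_span: "x \<in> VS.span A \<Longrightarrow> restr Z x \<in> VS.span (restr Z ` A)"
proof (induction rule: VS.span_induct_alt)
  case base show ?case unfolding restr_0 by (rule VS.span_zero)
next
  case (step c x y)
  have e: "restr Z (vscale c x + y) = vscale c (restr Z x) + restr Z y" by (simp only: restr_add restr_scale)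
  show ?case unfolding e
    by (rule VS.span_add[OF VS.span_scale[OF VS.span_base[OF imageI[OF step(1)]]] step(2)])
qed

lemma red_lt:
  assumes E: "E \<in> monoms m" and i: "i \<in> {1..n}" and h: "h \<in> {1..n}" and ih: "i < h"
    and k: "k \<in> {1..n}" and Nk: "N k = E + N h"
  shows "ev (E + N i) \<in> VS.span (b ` {k'' \<in> {1..n}. k'' < k})"
proof -
  have Eim: "E + N i \<in> monoms m" using E N_monoms[OF i] by (rule monoms_add)
  have "lt (N i) (N h)" using lt_idx[OF i h] ih by simp
  then have "lt (N i + E) (N h + E)" using lt_add N_monoms i h E by blast
  then have lt1: "lt (E + N i) (N k)" using Nk by (simp add: add.commute)
  have sub: "ev ` {E' \<in> Delta m s. mdvd E' (E + N i)} \<subseteq> b ` {k'' \<in> {1..n}. k'' < k}"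
  proof
    fix x assume "x \<in> ev ` {E' \<in> Delta m s. mdvd E' (E + N i)}"
    then obtain E' where E': "E' \<in> Delta m s" "mdvd E' (E + N i)" "x = ev E'" by auto
    have "E' \<in> N ` {1..n}" using E'(1) N_img by simp
    then obtain k'' where k'': "k'' \<in> {1..n}" "N k'' = E'" by auto
    have E'm: "E' \<in> monoms m" using E'(1) Delta_monoms by auto
    have "lt E' (N k)"
    proof (cases "E' = E + N i")
      case True then show ?thesis using lt1 by simp
    next
      case False
      then have "lt E' (E + N i)" using ord_div[OF E'm Eim E'(2)] by simp
      then show ?thesis using lt_trans[OF E'm Eim N_monoms[OF k]] lt1 by simp
    qed
    then have "k'' < k" using lt_idx[OF k''(1) k] k''(2) by simp
    then show "x \<in> b ` {k'' \<in> {1..n}. k'' < k}" using k'' E'(3) by (auto simp: b_def)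
  qed
  show ?thesis using ev_reduce[OF Eim] VS.span_mono[OF sub] by blast
qed

lemma ev_times_expand:
  assumes c: "c \<in> VS.span BB"
  shows "ev E * c = (\<Sum>i\<in>{1..n}. vscale (co c i) (ev (E + N i)))"
proof -
  have "ev E * c = ev E * (\<Sum>i\<in>{1..n}. vscale (co c i) (b i))" using co_expand[OF c] by simp
  also have "\<dots> = (\<Sum>i\<in>{1..n}. ev E * vscale (co c i) (b i))" by (rule sum_distrib_left)
  also have "\<dots> = (\<Sum>i\<in>{1..n}. vscale (co c i) (ev (E + N i)))"
    by (simp only: mult_vscale b_def ev_mult)
  finally show ?thesis .
qed

end



context evs begin

lemma card_hi:
  assumes U: "VS.subspace U" "U \<subseteq> VS.span BB"
  shows "fdim U \<le> card (hi ` (U - {0}))"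
proof -
  define H where "H = hi ` (U - {0})"
  have Hsub: "H \<subseteq> {1..n}"
  proof
    fix k assume "k \<in> H"
    then obtain c where c: "c \<in> U" "c \<noteq> 0" "k = hi c" by (auto simp: H_def)
    have "hi c \<in> NZ c" using hi_in c U(2) by auto
    then show "k \<in> {1..n}" using c(3) by (simp add: NZ_def)
  qed
  have finH: "finite H" using Hsub finite_subset by blast
  have "\<forall>k\<in>H. \<exists>c. c \<in> U \<and> c \<noteq> 0 \<and> hi c = k" by (auto simp: H_def)
  then obtain rr where rr: "\<forall>k\<in>H. rr k \<in> U \<and> rr k \<noteq> 0 \<and> hi (rr k) = k" by metis
  have main: "\<forall>c\<in>U. (\<forall>i\<in>{1..n}. k < i \<longrightarrow> co c i = 0) \<longrightarrow> c \<in> VS.span (rr ` H)" for k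
  proof (induction k)
    case 0
    show ?case
    proof (intro ballI impI)
      fix c assume c: "c \<in> U" and z: "\<forall>i\<in>{1..n}. 0 < i \<longrightarrow> co c i = 0"
      have "c = 0" using co_zero[of c] c U(2) z by auto
      then show "c \<in> VS.span (rr ` H)" by (simp add: VS.span_zero)
    qed
  next
    case (Suc k)
    show ?case
    proof (intro ballI impI)
      fix c assume c: "c \<in> U" and z: "\<forall>i\<in>{1..n}. Suc k < i \<longrightarrow> co c i = 0"
      have cB: "c \<in> VS.span BB" using c U(2) by auto
      show "c \<in> VS.span (rr ` H)"
      proof (cases "Suc k \<in> {1..n} \<and> co c (Suc k) \<noteq> 0")
        case False
        then have "\<forall>i\<in>{1..n}. k < i \<longrightarrow> co c i = 0" using z by (metis Suc_lessI)
        then show ?thesis using Suc.IH c by blast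
      next
        case True
        have c0: "c \<noteq> 0" using True co_0 by auto
        have skNZ: "Suc k \<in> NZ c" using True by (simp add: NZ_def)
        have "Suc k \<le> hi c" unfolding hi_def by (rule Max_ge[OF NZ_fin skNZ])
        moreover have "\<not> Suc k < hi c"
        proof
          assume "Suc k < hi c"
          moreover have "hi c \<in> NZ c" by (rule hi_in[OF cB c0])
          ultimately show False using z by (auto simp: NZ_def)
        qed
        ultimately have hic: "hi c = Suc k" by simp
        have kH: "Suc k \<in> H" unfolding H_def using c c0 hic by (intro image_eqI[of _ _ c]) auto
        define d where "d = rr (Suc k)"
        have d: "d \<in> U" "d \<noteq> 0" "hi d = Suc k" using rr kH by (auto simp: d_def)
        have dB: "d \<in> VS.span BB" using d(1) U(2) by auto
        have dk: "co d (Suc k) \<noteq> 0" using hi_in[OF dB d(2)] d(3) by (simp add: NZ_def)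
        define t where "t = co c (Suc k) / co d (Suc k)"
        define c' where "c' = c - vscale t d"
        have c'U: "c' \<in> U" unfolding c'_def using U(1) c d(1) by (intro VS.subspace_diff VS.subspace_scale) auto
        have "\<forall>i\<in>{1..n}. k < i \<longrightarrow> co c' i = 0"
        proof (intro ballI impI)
          fix i assume i: "i \<in> {1..n}" "k < i"
          have e: "co c' i = co c i - t * co d i" unfolding c'_def by (rule co_diff[OF cB dB i(1)])
          show "co c' i = 0"
          proof (cases "i = Suc k")
            case True then show ?thesis using e dk by (simp add: t_def)
          next
            case False then have ski: "Suc k < i" using i by simp
            then have "co c i = 0" using z i by auto
            moreover have "co d i = 0" using hi_max[OF dB i(1)] d(3) ski by simp
            ultimately show ?thesis using e by simp
          qed
        qed
        then have "c' \<in> VS.span (rr ` H)" using Suc.IH c'U by blast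
        moreover have "d \<in> VS.span (rr ` H)" unfolding d_def by (intro VS.span_base imageI kH)
        ultimately have "c' + vscale t d \<in> VS.span (rr ` H)" by (intro VS.span_add VS.span_scale)
        moreover have "c' + vscale t d = c" by (simp only: c'_def diff_add_cancel)
        ultimately show ?thesis by simp
      qed
    qed
  qed
  have "U \<subseteq> VS.span (rr ` H)" using main[of n] by auto
  then have "fdim U \<le> card (rr ` H)" by (rule VS.dim_le_card) (use finH in simp)
  also have "\<dots> \<le> card H" by (rule card_image_le[OF finH])
  finally show ?thesis by (simp add: H_def)
qed

end



context evs begin

lemma supp_Vn: "U \<subseteq> Vn n \<Longrightarrow> supp U \<subseteq> {..<n}"
proof
  fix x assume U: "U \<subseteq> Vn n" and "x \<in> supp U"
  then obtain c where c: "c \<in> U" "c x \<noteq> 0" by (auto simp: supp_def)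
  then have "\<forall>j\<ge>n. c j = 0" using U by (auto simp: Vn_def)
  then show "x \<in> {..<n}" using c(2) by (metis lessThan_iff not_less)
qed

lemma primal:
  assumes L: "L2 \<subset> L1" "L1 \<subseteq> Delta m s"
    and U: "VS.subspace U" "U \<subseteq> evcode m n alpha L1" "U \<inter> evcode m n alpha L2 = {0}"
    and v: "v \<le> fdim U"
  shows "\<exists>K. K \<subseteq> N ` {Min {i \<in> {1..n}. N i \<in> L1 - L2}..n} \<inter> L1 \<and> card K = v \<and> DK m s K \<le> card (supp U)"
proof -
  define u where "u = Min {i \<in> {1..n}. N i \<in> L1 - L2}"
  have L2D: "L2 \<subseteq> Delta m s" using L by auto
  have UB: "U \<subseteq> VS.span BB" using U(2) evcode_B[OF L(2)] by auto
  have UV: "U \<subseteq> Vn n" using U(2) evcode_Vn by auto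
  have C1: "evcode m n alpha L1 = VS.span (b ` idx L1)" using evcode_eq ev_L[OF L(2)] by simp
  have C2: "evcode m n alpha L2 = VS.span (b ` idx L2)" using evcode_eq ev_L[OF L2D] by simp
  define H where "H = hi ` (U - {0})"
  have Hprop: "k \<in> {1..n} \<and> u \<le> k \<and> N k \<in> L1" if kH: "k \<in> H" for k
  proof -
    obtain c where c: "c \<in> U" "c \<noteq> 0" "k = hi c" using kH by (auto simp: H_def)
    have cB: "c \<in> VS.span BB" using c UB by auto
    have "k \<in> NZ c" using hi_in[OF cB c(2)] c(3) by simp
    then have k1: "k \<in> {1..n}" "co c k \<noteq> 0" by (auto simp: NZ_def)
    have cL1: "c \<in> VS.span (b ` idx L1)" using c U(2) C1 by auto
    have "k \<in> idx L1" using span_idx_coeff[OF idx_sub cL1, of k] k1 by auto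
    then have NkL1: "N k \<in> L1" by (simp add: idx_def)
    have "u \<le> k"
    proof (rule ccontr)
      assume ku: "\<not> u \<le> k"
      have "c \<in> VS.span (b ` idx L2)"
      proof (rule coeff_span_idx[OF cB])
        fix k' assume k': "k' \<in> {1..n} - idx L2"
        show "co c k' = 0"
        proof (rule ccontr)
          assume nz: "co c k' \<noteq> 0"
          have "k' \<in> idx L1" using span_idx_coeff[OF idx_sub cL1, of k'] k' nz by auto
          then have "k' \<in> {i \<in> {1..n}. N i \<in> L1 - L2}" using k' by (auto simp: idx_def)
          then have "u \<le> k'" unfolding u_def by (intro Min_le) auto
          moreover have "k' \<le> k"
          proof (rule ccontr)
            assume "\<not> k' \<le> k"
            then have "hi c < k'" using c(3) by simp
            then show False using hi_max[OF cB, of k'] k' nz by auto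
          qed
          ultimately show False using ku by simp
        qed
      qed
      then have "c \<in> evcode m n alpha L2" using C2 by simp
      then show False using U(3) c by auto
    qed
    then show ?thesis using k1 NkL1 by simp
  qed
  have cardH: "v \<le> card H" using card_hi[OF U(1) UB] v by (simp add: H_def)
  obtain H' where H': "H' \<subseteq> H" "card H' = v" "finite H'" using obtain_subset_with_card_n[OF cardH] by metis
  have H'1: "H' \<subseteq> {1..n}" using H' Hprop by auto
  have "\<forall>h\<in>H. \<exists>c. c \<in> U \<and> c \<noteq> 0 \<and> hi c = h" by (auto simp: H_def)
  then obtain rr where rr: "\<forall>h\<in>H. rr h \<in> U \<and> rr h \<noteq> 0 \<and> hi (rr h) = h" by metis
  define K where "K = N ` H'"
  define Z where "Z = {..<n} - supp U"
  define JT where "JT = {k \<in> {1..n}. \<not> (\<exists>h\<in>H'. mdvd (N h) (N k))}"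
  have claim: "k \<in> {1..n} \<Longrightarrow> restr Z (b k) \<in> VS.span (restr Z ` b ` JT)" for k
  proof (induction k rule: less_induct)
    case (less k)
    show ?case
    proof (cases "k \<in> JT")
      case True then show ?thesis by (intro VS.span_base imageI)
    next
      case False
      then obtain h where h: "h \<in> H'" "mdvd (N h) (N k)" using less.prems by (auto simp: JT_def)
      have hH: "h \<in> H" using h H' by auto
      have h1: "h \<in> {1..n}" using hH Hprop by auto
      define c where "c = rr h"
      have c: "c \<in> U" "c \<noteq> 0" "hi c = h" using rr hH by (auto simp: c_def)
      have cB: "c \<in> VS.span BB" using c UB by auto
      have ch: "co c h \<noteq> 0" using hi_in[OF cB c(2)] c(3) by (simp add: NZ_def)
      define E where "E = (\<lambda>i. N k i - N h i)"
      have Em: "E \<in> monoms m" using N_monoms[OF less.prems] by (auto simp: E_def monoms_def)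
      have NkE: "N k = E + N h" using h(2) by (auto simp: E_def mdvd_def fun_eq_iff)
      define Kset where "Kset = {k'' \<in> {1..n}. k'' < k}"
      define y where "y = (\<Sum>i\<in>{1..n}-{h}. vscale (co c i) (ev (E + N i)))"
      have exp: "ev E * c = vscale (co c h) (b k) + y"
      proof -
        have "ev E * c = (\<Sum>i\<in>{1..n}. vscale (co c i) (ev (E + N i)))" by (rule ev_times_expand[OF cB])
        also have "\<dots> = vscale (co c h) (ev (E + N h)) + y"
          unfolding y_def using h1 by (simp add: sum.remove)
        also have "ev (E + N h) = b k" using NkE by (simp add: b_def)
        finally show ?thesis .
      qed
      have yK: "y \<in> VS.span (b ` Kset)"
        unfolding y_def
      proof (rule VS.span_sum)
        fix i assume i: "i \<in> {1..n} - {h}"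
        show "vscale (co c i) (ev (E + N i)) \<in> VS.span (b ` Kset)"
        proof (cases "i < h")
          case True
          have "ev (E + N i) \<in> VS.span (b ` Kset)"
            using red_lt[OF Em _ h1 True less.prems NkE] i unfolding Kset_def by auto
          then show ?thesis by (rule VS.span_scale)
        next
          case False
          then have "hi c < i" using i c(3) by auto
          then have "co c i = 0" using hi_max[OF cB] i by auto
          then show ?thesis by (simp add: VS.span_zero)
        qed
      qed
      have r0: "restr Z (ev E * c) = 0"
      proof (rule ext)
        fix j show "restr Z (ev E * c) j = 0 j"
        proof (cases "j \<in> Z")
          case True then have "j \<notin> supp U" by (simp add: Z_def)
          then have "c j = 0" using c(1) by (auto simp: supp_def)
          then show ?thesis by (simp add: restr_def)
        next
          case False then show ?thesis by (simp add: restr_def)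
        qed
      qed
      have IHs: "VS.span (restr Z ` b ` Kset) \<subseteq> VS.span (restr Z ` b ` JT)"
      proof (rule VS.span_minimal)
        show "restr Z ` b ` Kset \<subseteq> VS.span (restr Z ` b ` JT)" using less.IH by (auto simp: Kset_def)
      qed simp
      have ry: "restr Z y \<in> VS.span (restr Z ` b ` JT)" using restr_span[OF yK] IHs by auto
      have eq: "vscale (co c h) (restr Z (b k)) = - restr Z y"
      proof -
        have "0 = restr Z (vscale (co c h) (b k) + y)" using r0 exp by simp
        also have "\<dots> = vscale (co c h) (restr Z (b k)) + restr Z y" by (simp only: restr_add restr_scale)
        finally show ?thesis by (simp add: eq_neg_iff_add_eq_0)
      qed
      have "vscale (co c h) (restr Z (b k)) \<in> VS.span (restr Z ` b ` JT)"
        unfolding eq by (rule VS.span_neg[OF ry])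
      then have "vscale (inverse (co c h)) (vscale (co c h) (restr Z (b k))) \<in> VS.span (restr Z ` b ` JT)"
        by (rule VS.span_scale)
      then show ?thesis using ch by (simp add: VS.scale_scale)
    qed
  qed
  have JTsub: "JT \<subseteq> {1..n}" by (auto simp: JT_def)
  have finJT: "finite JT" using JTsub finite_subset by blast
  have Zsub: "Z \<subseteq> {..<n}" by (auto simp: Z_def)
  have deltaZ: "delta ` Z \<subseteq> VS.span (restr Z ` b ` JT)"
  proof
    fix x assume "x \<in> delta ` Z"
    then obtain j where j: "j \<in> Z" "x = delta j" by auto
    have jn: "j < n" using Zsub j by auto
    have "delta j \<in> VS.span (b ` {1..n})" using Vn_span delta_Vn[of j] jn B_eq by auto
    then have "restr Z (delta j) \<in> VS.span (restr Z ` b ` {1..n})" by (rule restr_span)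
    moreover have "VS.span (restr Z ` b ` {1..n}) \<subseteq> VS.span (restr Z ` b ` JT)"
      by (rule VS.span_minimal) (use claim in auto)
    moreover have "restr Z (delta j) = delta j" using j(1) by (auto simp: restr_def delta_def fun_eq_iff)
    ultimately show "x \<in> VS.span (restr Z ` b ` JT)" using j by auto
  qed
  have "card (delta ` Z) \<le> card (restr Z ` b ` JT)"
    using VS.independent_span_bound[OF _ delta_indep deltaZ] finJT by simp
  also have "\<dots> \<le> card (b ` JT)" by (rule card_image_le) (use finJT in simp)
  also have "\<dots> \<le> card JT" by (rule card_image_le[OF finJT])
  finally have cZ: "card Z \<le> card JT"
    using card_image[of delta Z] delta_inj' by (simp add: inj_on_def)
  have ssub: "supp U \<subseteq> {..<n}" using supp_Vn[OF UV] .
  have cs: "card Z = n - card (supp U)" unfolding Z_def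
    using card_Diff_subset[OF finite_subset[OF ssub] ssub] by simp
  have csn: "card (supp U) \<le> n" using card_mono[OF _ ssub] by simp
  have DKeq: "{N' \<in> Delta m s. \<exists>M\<in>K. mdvd M N'} = N ` ({1..n} - JT)"
  proof
    show "{N' \<in> Delta m s. \<exists>M\<in>K. mdvd M N'} \<subseteq> N ` ({1..n} - JT)"
    proof
      fix x assume x: "x \<in> {N' \<in> Delta m s. \<exists>M\<in>K. mdvd M N'}"
      then have "x \<in> N ` {1..n}" using N_img by auto
      then obtain k where k: "k \<in> {1..n}" "x = N k" by auto
      then have "k \<notin> JT" using x by (auto simp: JT_def K_def)
      then show "x \<in> N ` ({1..n} - JT)" using k by auto
    qed
    show "N ` ({1..n} - JT) \<subseteq> {N' \<in> Delta m s. \<exists>M\<in>K. mdvd M N'}"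
      using N_mem by (auto simp: JT_def K_def)
  qed
  have "DK m s K = card ({1..n} - JT)"
    unfolding DK_def DKeq by (rule card_image) (rule inj_on_subset[OF N_inj], auto)
  also have "\<dots> = n - card JT" using card_Diff_subset[OF finJT JTsub] by simp
  finally have "DK m s K \<le> card (supp U)" using cZ cs csn by linarith
  moreover have "K \<subseteq> N ` {u..n} \<inter> L1" using H' Hprop by (auto simp: K_def)
  moreover have "card K = v" unfolding K_def using card_image[OF inj_on_subset[OF N_inj H'1]] H'(2) by simp
  ultimately show ?thesis unfolding u_def by blast
qed

end



context evs begin

definition dot :: "(nat \<Rightarrow> 'a) \<Rightarrow> (nat \<Rightarrow> 'a) \<Rightarrow> 'a" where
  "dot c x = (\<Sum>j<n. c j * x j)"

lemma dot_add: "dot c (x + y) = dot c x + dot c y"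
  by (simp add: dot_def distrib_left sum.distrib)

lemma dot_scale: "dot c (vscale a x) = a * dot c x"
  by (simp add: dot_def vscale_apply sum_distrib_left mult.left_commute)

lemma dot_zero: "dot c 0 = 0" by (simp add: dot_def)

lemma dot_span: "x \<in> VS.span A \<Longrightarrow> (\<And>a. a \<in> A \<Longrightarrow> dot c a = 0) \<Longrightarrow> dot c x = 0"
proof (induction rule: VS.span_induct_alt)
  case base show ?case by (rule dot_zero)
next
  case (step a x y)
  then show ?case by (simp only: dot_add dot_scale) simp
qed

lemma dot_sum: "dot c (\<Sum>k\<in>J. vscale (a k) (y k)) = (\<Sum>k\<in>J. a k * dot c (y k))"
proof (induction J rule: infinite_finite_induct)
  case (infinite A) then show ?case by (simp add: dot_def)
next
  case empty then show ?case by (simp add: dot_def)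
next
  case (insert x F) then show ?case by (simp only: sum.insert[OF insert(1,2)] dot_add dot_scale insert(3))
qed

lemma dot_delta: "j < n \<Longrightarrow> dot c (delta j) = c j"
proof -
  assume j: "j < n"
  have "dot c (delta j) = (\<Sum>j'<n. if j' = j then c j else 0)"
    unfolding dot_def by (rule sum.cong) (auto simp: delta_def)
  also have "\<dots> = c j" using j by simp
  finally show ?thesis .
qed

lemma dot_nonzero:
  assumes c: "c \<in> Vn n" "c \<noteq> 0"
  shows "\<exists>k\<in>{1..n}. dot c (b k) \<noteq> 0"
proof (rule ccontr)
  assume "\<not> ?thesis"
  then have z: "\<And>k. k \<in> {1..n} \<Longrightarrow> dot c (b k) = 0" by auto
  have "c j = 0" for j
  proof (cases "j < n")
    case True
    have "delta j \<in> VS.span (b ` {1..n})" using Vn_span delta_Vn[of j] True B_eq by auto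
    then have "dot c (delta j) = 0" by (rule dot_span) (use z in auto)
    then show ?thesis using dot_delta[OF True] by simp
  next
    case False then show ?thesis using c(1) by (simp add: Vn_def)
  qed
  then show False using c(2) by (simp add: fun_eq_iff)
qed

definition OZ where "OZ c = {k \<in> {1..n}. dot c (b k) \<noteq> 0}"
definition lo where "lo c = Min (OZ c)"

lemma OZ_fin: "finite (OZ c)" by (simp add: OZ_def)

lemma lo_in: "c \<in> Vn n \<Longrightarrow> c \<noteq> 0 \<Longrightarrow> lo c \<in> OZ c"
  unfolding lo_def using dot_nonzero[of c] by (intro Min_in[OF OZ_fin]) (auto simp: OZ_def)

lemma lo_min: "i \<in> {1..n} \<Longrightarrow> i < lo c \<Longrightarrow> dot c (b i) = 0"
proof (rule ccontr)
  assume i: "i \<in> {1..n}" "i < lo c" "dot c (b i) \<noteq> 0"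
  then have "i \<in> OZ c" by (simp add: OZ_def)
  then have "lo c \<le> i" unfolding lo_def by (rule Min_le[OF OZ_fin])
  then show False using i by simp
qed

lemma card_lo:
  assumes U: "VS.subspace U" "U \<subseteq> Vn n"
  shows "fdim U \<le> card (lo ` (U - {0}))"
proof -
  define H where "H = lo ` (U - {0})"
  have Hsub: "H \<subseteq> {1..n}"
  proof
    fix k assume "k \<in> H"
    then obtain c where c: "c \<in> U" "c \<noteq> 0" "k = lo c" by (auto simp: H_def)
    have "lo c \<in> OZ c" using lo_in c U(2) by auto
    then show "k \<in> {1..n}" using c(3) by (simp add: OZ_def)
  qed
  have finH: "finite H" using Hsub finite_subset by blast
  have "\<forall>k\<in>H. \<exists>c. c \<in> U \<and> c \<noteq> 0 \<and> lo c = k" by (auto simp: H_def)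
  then obtain rr where rr: "\<forall>k\<in>H. rr k \<in> U \<and> rr k \<noteq> 0 \<and> lo (rr k) = k" by metis
  have main: "\<forall>c\<in>U. (\<forall>i\<in>{1..n}. i + t \<le> n \<longrightarrow> dot c (b i) = 0) \<longrightarrow> c \<in> VS.span (rr ` H)" for t
  proof (induction t)
    case 0
    show ?case
    proof (intro ballI impI)
      fix c assume c: "c \<in> U" and z: "\<forall>i\<in>{1..n}. i + 0 \<le> n \<longrightarrow> dot c (b i) = 0"
      have "c = 0" using dot_nonzero[of c] c U(2) z by auto
      then show "c \<in> VS.span (rr ` H)" by (simp add: VS.span_zero)
    qed
  next
    case (Suc t)
    show ?case
    proof (intro ballI impI)
      fix c assume c: "c \<in> U" and z: "\<forall>i\<in>{1..n}. i + Suc t \<le> n \<longrightarrow> dot c (b i) = 0"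
      have cV: "c \<in> Vn n" using c U(2) by auto
      define k where "k = n - t"
      show "c \<in> VS.span (rr ` H)"
      proof (cases "t < n \<and> dot c (b k) \<noteq> 0")
        case False
        have "\<forall>i\<in>{1..n}. i + t \<le> n \<longrightarrow> dot c (b i) = 0"
        proof (intro ballI impI)
          fix i assume i: "i \<in> {1..n}" "i + t \<le> n"
          show "dot c (b i) = 0"
          proof (cases "i + Suc t \<le> n")
            case True then show ?thesis using z i by auto
          next
            case False
            then have "i = k" "t < n" using i by (auto simp: k_def)
            then show ?thesis using \<open>\<not> (t < n \<and> dot c (b k) \<noteq> 0)\<close> by auto
          qed
        qed
        then show ?thesis using Suc.IH c by blast
      next
        case True
        have k1: "k \<in> {1..n}" using True by (auto simp: k_def)
        have c0: "c \<noteq> 0" using True by (auto simp: dot_def)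
        have kOZ: "k \<in> OZ c" using True k1 by (simp add: OZ_def)
        have "lo c \<le> k" unfolding lo_def by (rule Min_le[OF OZ_fin kOZ])
        moreover have "\<not> lo c < k"
        proof
          assume lk: "lo c < k"
          have "lo c \<in> OZ c" by (rule lo_in[OF cV c0])
          then have "lo c \<in> {1..n}" "dot c (b (lo c)) \<noteq> 0" by (auto simp: OZ_def)
          moreover have "lo c + Suc t \<le> n" using lk k1 by (simp add: k_def)
          ultimately show False using z by auto
        qed
        ultimately have loc: "lo c = k" by simp
        have kH: "k \<in> H" unfolding H_def using c c0 loc by (intro image_eqI[of _ _ c]) auto
        define d where "d = rr k"
        have d: "d \<in> U" "d \<noteq> 0" "lo d = k" using rr kH by (auto simp: d_def)
        have dV: "d \<in> Vn n" using d(1) U(2) by auto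
        have dk: "dot d (b k) \<noteq> 0" using lo_in[OF dV d(2)] d(3) by (simp add: OZ_def)
        define tt where "tt = dot c (b k) / dot d (b k)"
        define c' where "c' = c - vscale tt d"
        have c'U: "c' \<in> U" unfolding c'_def using U(1) c d(1) by (intro VS.subspace_diff VS.subspace_scale) auto
        have "\<forall>i\<in>{1..n}. i + t \<le> n \<longrightarrow> dot c' (b i) = 0"
        proof (intro ballI impI)
          fix i assume i: "i \<in> {1..n}" "i + t \<le> n"
          have e: "dot c' (b i) = dot c (b i) - tt * dot d (b i)"
            by (simp add: c'_def dot_def vscale_apply sum_subtractf left_diff_distrib sum_distrib_left mult.assoc)
          show "dot c' (b i) = 0"
          proof (cases "i = k")
            case True then show ?thesis using e dk by (simp add: tt_def)
          next
            case False then have ik: "i + Suc t \<le> n" "i < k" using i by (auto simp: k_def)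
            then have "dot c (b i) = 0" using z i by auto
            moreover have "dot d (b i) = 0" using lo_min[OF i(1)] d(3) ik by simp
            ultimately show ?thesis using e by simp
          qed
        qed
        then have "c' \<in> VS.span (rr ` H)" using Suc.IH c'U by blast
        moreover have "d \<in> VS.span (rr ` H)" unfolding d_def by (intro VS.span_base imageI kH)
        ultimately have "c' + vscale tt d \<in> VS.span (rr ` H)" by (intro VS.span_add VS.span_scale)
        moreover have "c' + vscale tt d = c" by (simp only: c'_def diff_add_cancel)
        ultimately show ?thesis by simp
      qed
    qed
  qed
  have "U \<subseteq> VS.span (rr ` H)" using main[of n] by auto
  then have "fdim U \<le> card (rr ` H)" by (rule VS.dim_le_card) (use finH in simp)
  also have "\<dots> \<le> card H" by (rule card_image_le[OF finH])
  finally show ?thesis by (simp add: H_def)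
qed

lemma finite_Vn: "finite (Vn n :: (nat \<Rightarrow> 'a) set)"
proof -
  have fin: "finite (PiE {..<n} (\<lambda>_. UNIV :: 'a set))" by (rule finite_PiE) auto
  have sub: "Vn n \<subseteq> (\<lambda>g j. if j < n then g j else (0::'a)) ` PiE {..<n} (\<lambda>_. UNIV :: 'a set)"
  proof
    fix f :: "nat \<Rightarrow> 'a" assume f: "f \<in> Vn n"
    have "f = (\<lambda>j. if j < n then restrict f {..<n} j else 0)" using f by (auto simp: Vn_def fun_eq_iff)
    moreover have "restrict f {..<n} \<in> PiE {..<n} (\<lambda>_. UNIV)" by simp
    ultimately show "f \<in> (\<lambda>g j. if j < n then g j else (0::'a)) ` PiE {..<n} (\<lambda>_. UNIV :: 'a set)" by blast
  qed
  show ?thesis by (rule finite_surj[OF fin sub])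
qed

lemma dual_basis: "\<exists>d. \<forall>i\<in>{1..n}. d i \<in> Vn n \<and> (\<forall>k\<in>{1..n}. dot (d i) (b k) = (if k = i then 1 else 0))"
proof -
  define T where "T c = (\<lambda>k. if k < n then dot c (b (Suc k)) else 0)" for c
  have TV: "T ` Vn n \<subseteq> Vn n" by (auto simp: T_def Vn_def)
  have Tinj: "inj_on T (Vn n)"
  proof (rule inj_onI)
    fix x y assume x: "x \<in> Vn n" and y: "y \<in> Vn n" and e: "T x = T y"
    have xy: "x - y \<in> Vn n" using x y by (auto simp: Vn_def)
    have "dot (x - y) (b k) = 0" if k: "k \<in> {1..n}" for k
    proof -
      have "T x (k - 1) = T y (k - 1)" using e by simp
      moreover have "Suc (k - 1) = k" "k - 1 < n" using k by auto
      ultimately have "dot x (b k) = dot y (b k)" by (simp add: T_def)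
      then show ?thesis by (simp add: dot_def left_diff_distrib sum_subtractf)
    qed
    then have "x - y = 0" using dot_nonzero[OF xy] by auto
    then show "x = y" by simp
  qed
  have surj: "T ` Vn n = Vn n" by (rule endo_inj_surj[OF finite_Vn TV Tinj])
  have "\<forall>i\<in>{1..n}. \<exists>c. c \<in> Vn n \<and> T c = delta (i - 1)"
  proof
    fix i assume i: "i \<in> {1..n}"
    have "i - 1 < n" using i by auto
    then have "delta (i - 1) \<in> Vn n" using delta_Vn by simp
    then show "\<exists>c. c \<in> Vn n \<and> T c = delta (i - 1)" using surj by (metis imageE)
  qed
  then obtain d where d: "\<forall>i\<in>{1..n}. d i \<in> Vn n \<and> T (d i) = delta (i - 1)" by metis
  have "dot (d i) (b k) = (if k = i then 1 else 0)" if i: "i \<in> {1..n}" and k: "k \<in> {1..n}" for i k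
  proof -
    have "T (d i) (k - 1) = delta (i - 1) (k - 1)" using d i by simp
    moreover have "Suc (k - 1) = k" "k - 1 < n" using k by auto
    moreover have "(k - 1 = i - 1) = (k = i)" using i k by auto
    ultimately show ?thesis by (simp add: T_def delta_def)
  qed
  then show ?thesis using d by blast
qed

end



context evs begin

lemma dual_iff: "c \<in> dual n C \<longleftrightarrow> c \<in> Vn n \<and> (\<forall>x\<in>C. dot c x = 0)"
  by (simp add: dual_def dot_def)

lemma sum_ind: "finite J \<Longrightarrow> k0 \<in> J \<Longrightarrow> (\<Sum>k\<in>J. (if k = k0 then 1 else 0) * g k) = (g k0 :: 'a)"
proof -
  assume J: "finite J" "k0 \<in> J"
  have "(\<Sum>k\<in>J. (if k = k0 then 1 else 0) * g k) = (\<Sum>k\<in>J. if k = k0 then g k0 else 0)"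
    by (rule sum.cong) auto
  also have "\<dots> = g k0" using J by simp
  finally show ?thesis .
qed

lemma restr_expand: "finite Sp \<Longrightarrow> restr Sp y = (\<Sum>j\<in>Sp. vscale (y j) (delta j))"
proof (rule ext)
  fix x assume Sp: "finite Sp"
  have "(\<Sum>j\<in>Sp. vscale (y j) (delta j)) x = (\<Sum>j\<in>Sp. if j = x then y x else 0)"
    unfolding sum_fun_apply by (rule sum.cong) (auto simp: vscale_apply delta_def)
  also have "\<dots> = restr Sp y x" using Sp by (simp add: restr_def)
  finally show "restr Sp y x = (\<Sum>j\<in>Sp. vscale (y j) (delta j)) x" by simp
qed

lemma dualb:
  assumes L: "L2 \<subset> L1" "L1 \<subseteq> Delta m s"
    and U: "VS.subspace U" "U \<subseteq> dual n (evcode m n alpha L2)" "U \<inter> dual n (evcode m n alpha L1) = {0}"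
    and v: "v \<le> fdim U"
  shows "\<exists>K. K \<subseteq> N ` {1..Max {i \<in> {1..n}. N i \<in> L1}} - L2 \<and> card K = v \<and> DKperp m s K \<le> card (supp U)"
proof -
  define up where "up = Max {i \<in> {1..n}. N i \<in> L1}"
  have L2D: "L2 \<subseteq> Delta m s" using L by auto
  have UV: "U \<subseteq> Vn n" using U(2) by (auto simp: dual_iff)
  have C1: "evcode m n alpha L1 = VS.span (b ` idx L1)" using evcode_eq ev_L[OF L(2)] by simp
  define H where "H = lo ` (U - {0})"
  have Hprop: "k \<in> {1..n} \<and> k \<le> up \<and> N k \<notin> L2" if kH: "k \<in> H" for k
  proof -
    obtain c where c: "c \<in> U" "c \<noteq> 0" "k = lo c" using kH by (auto simp: H_def)
    have cV: "c \<in> Vn n" using c UV by auto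
    have "k \<in> OZ c" using lo_in[OF cV c(2)] c(3) by simp
    then have k1: "k \<in> {1..n}" "dot c (b k) \<noteq> 0" by (auto simp: OZ_def)
    have "N k \<notin> L2"
    proof
      assume "N k \<in> L2"
      then have "b k \<in> evcode m n alpha L2" unfolding evcode_eq b_def by (intro VS.span_base imageI)
      then have "dot c (b k) = 0" using c(1) U(2) by (auto simp: dual_iff)
      then show False using k1 by simp
    qed
    moreover have "k \<le> up"
    proof -
      have "c \<notin> dual n (evcode m n alpha L1)" using U(3) c by auto
      then have "\<exists>x\<in>evcode m n alpha L1. dot c x \<noteq> 0" using cV by (simp add: dual_iff)
      then obtain x where x: "x \<in> evcode m n alpha L1" "dot c x \<noteq> 0" by (rule bexE)
      have "\<exists>k'\<in>idx L1. dot c (b k') \<noteq> 0"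
      proof (rule ccontr)
        assume nt: "\<not> ?thesis"
        have x1: "x \<in> VS.span (b ` idx L1)" using x(1) C1 by simp
        have "dot c x = 0" by (rule dot_span[OF x1]) (use nt in auto)
        then show False using x(2) by simp
      qed
      then obtain k' where k': "k' \<in> idx L1" "dot c (b k') \<noteq> 0" by auto
      have "k' \<in> OZ c" using k' by (auto simp: OZ_def idx_def)
      then have "lo c \<le> k'" unfolding lo_def by (rule Min_le[OF OZ_fin])
      moreover have "k' \<le> up" unfolding up_def using k'(1) by (intro Max_ge) (auto simp: idx_def)
      ultimately show ?thesis using c(3) by simp
    qed
    ultimately show ?thesis using k1 by simp
  qed
  have cardH: "v \<le> card H" using card_lo[OF U(1) UV] v by (simp add: H_def)
  obtain H' where H': "H' \<subseteq> H" "card H' = v" "finite H'" using obtain_subset_with_card_n[OF cardH] by metis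
  have H'1: "H' \<subseteq> {1..n}" using H' Hprop by auto
  have "\<forall>h\<in>H. \<exists>c. c \<in> U \<and> c \<noteq> 0 \<and> lo c = h" by (auto simp: H_def)
  then obtain rr where rr: "\<forall>h\<in>H. rr h \<in> U \<and> rr h \<noteq> 0 \<and> lo (rr h) = h" by metis
  define K where "K = N ` H'"
  define Sp where "Sp = supp U"
  define J where "J = {k \<in> {1..n}. \<exists>h\<in>H'. mdvd (N k) (N h)}"
  have J1: "J \<subseteq> {1..n}" by (auto simp: J_def)
  have finJ: "finite J" using J1 finite_subset by blast
  have Spsub: "Sp \<subseteq> {..<n}" unfolding Sp_def by (rule supp_Vn[OF UV])
  have finSp: "finite Sp" using Spsub finite_subset by blast
  have key: "\<forall>k\<in>J. a k = 0" if hyp: "\<forall>j\<in>Sp. (\<Sum>k\<in>J. a k * b k j) = 0" for a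
  proof (rule ccontr)
    assume "\<not> (\<forall>k\<in>J. a k = 0)"
    define NZa where "NZa = {k \<in> J. a k \<noteq> 0}"
    have finNZa: "finite NZa" using finJ by (simp add: NZa_def)
    have neNZa: "NZa \<noteq> {}" using \<open>\<not> (\<forall>k\<in>J. a k = 0)\<close> by (auto simp: NZa_def)
    define ks where "ks = Max NZa"
    have ksin: "ks \<in> NZa" unfolding ks_def by (rule Max_in[OF finNZa neNZa])
    then have ksJ: "ks \<in> J" and aks: "a ks \<noteq> 0" by (auto simp: NZa_def)
    have ksmax: "k \<le> ks" if "k \<in> J" "a k \<noteq> 0" for k
      unfolding ks_def using that by (intro Max_ge[OF finNZa]) (auto simp: NZa_def)
    obtain h where h: "h \<in> H'" "mdvd (N ks) (N h)" using ksJ by (auto simp: J_def)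
    have ks1: "ks \<in> {1..n}" using ksJ J1 by auto
    have hH: "h \<in> H" using h H' by auto
    have h1: "h \<in> {1..n}" using hH Hprop by auto
    define c where "c = rr h"
    have c: "c \<in> U" "c \<noteq> 0" "lo c = h" using rr hH by (auto simp: c_def)
    have cV: "c \<in> Vn n" using c UV by auto
    have ch: "dot c (b h) \<noteq> 0" using lo_in[OF cV c(2)] c(3) by (simp add: OZ_def)
    define E where "E = (\<lambda>i. N h i - N ks i)"
    have Em: "E \<in> monoms m" using N_monoms[OF h1] by (auto simp: E_def monoms_def)
    have NhE: "N h = E + N ks" using h(2) by (auto simp: E_def mdvd_def fun_eq_iff)
    define x where "x = (\<Sum>k\<in>J. vscale (a k) (b k))"
    have xj: "x j = (\<Sum>k\<in>J. a k * b k j)" for j by (simp add: x_def sum_fun_apply vscale_apply)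
    have d0: "dot c (ev E * x) = 0"
      unfolding dot_def
    proof (rule sum.neutral, rule ballI)
      fix j assume j: "j \<in> {..<n}"
      show "c j * (ev E * x) j = 0"
      proof (cases "c j = 0")
        case False
        then have "j \<in> Sp" using c(1) by (auto simp: Sp_def supp_def)
        then have "x j = 0" using hyp xj by simp
        then show ?thesis by simp
      qed simp
    qed
    have "ev E * x = (\<Sum>k\<in>J. ev E * vscale (a k) (b k))" unfolding x_def by (rule sum_distrib_left)
    also have "\<dots> = (\<Sum>k\<in>J. vscale (a k) (ev (E + N k)))" by (simp only: mult_vscale b_def ev_mult)
    finally have "dot c (ev E * x) = (\<Sum>k\<in>J. a k * dot c (ev (E + N k)))" by (simp only: dot_sum)
    also have "\<dots> = a ks * dot c (ev (E + N ks)) + (\<Sum>k\<in>J - {ks}. a k * dot c (ev (E + N k)))"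
      using finJ ksJ by (simp add: sum.remove)
    also have "(\<Sum>k\<in>J - {ks}. a k * dot c (ev (E + N k))) = 0"
    proof (rule sum.neutral, rule ballI)
      fix k assume k: "k \<in> J - {ks}"
      show "a k * dot c (ev (E + N k)) = 0"
      proof (cases "a k = 0")
        case False
        then have kks: "k < ks" using ksmax[of k] k by auto
        have k1: "k \<in> {1..n}" using k J1 by auto
        have "ev (E + N k) \<in> VS.span (b ` {k'' \<in> {1..n}. k'' < h})"
          by (rule red_lt[OF Em k1 ks1 kks h1 NhE])
        then have "dot c (ev (E + N k)) = 0" by (rule dot_span) (auto simp: lo_min c(3))
        then show ?thesis by simp
      qed simp
    qed
    also have "ev (E + N ks) = b h" using NhE by (simp add: b_def)
    finally have F: "dot c (ev E * x) = a ks * dot c (b h) + 0" .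
    have "a ks * dot c (b h) = 0" using F d0 by (metis add_0_right)
    then show False using aks ch by simp
  qed
  define R where "R k = restr Sp (b k)" for k
  have Rj: "R k j = b k j" if "j \<in> Sp" for k j using that by (simp add: R_def restr_def)
  have Rinj: "inj_on R J"
  proof (rule inj_onI, rule ccontr)
    fix k1 k2 assume k: "k1 \<in> J" "k2 \<in> J" "R k1 = R k2" "k1 \<noteq> k2"
    define a where "a k = (if k = k1 then 1 else 0) - (if k = k2 then 1 else (0::'a))" for k
    have "\<forall>j\<in>Sp. (\<Sum>k\<in>J. a k * b k j) = 0"
    proof
      fix j assume j: "j \<in> Sp"
      have "(\<Sum>k\<in>J. a k * b k j) = (\<Sum>k\<in>J. (if k = k1 then 1 else 0) * b k j) - (\<Sum>k\<in>J. (if k = k2 then 1 else 0) * b k j)"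
        unfolding a_def by (simp add: left_diff_distrib sum_subtractf)
      also have "\<dots> = b k1 j - b k2 j" using sum_ind[OF finJ k(1)] sum_ind[OF finJ k(2)] by simp
      also have "\<dots> = 0" using Rj[OF j, of k1] Rj[OF j, of k2] k(3) by simp
      finally show "(\<Sum>k\<in>J. a k * b k j) = 0" .
    qed
    then have "a k1 = 0" using key k(1) by blast
    then show False using k(4) by (simp add: a_def)
  qed
  have indep: "VS.independent (R ` J)"
  proof (rule VS.independent_if_scalars_zero)
    show "finite (R ` J)" using finJ by simp
  next
    fix f y assume sum: "(\<Sum>x\<in>R ` J. vscale (f x) x) = 0" and y: "y \<in> R ` J"
    have "(\<Sum>k\<in>J. vscale (f (R k)) (R k)) = 0" using sum sum.reindex[OF Rinj, of "\<lambda>x. vscale (f x) x"] by simp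
    then have "\<forall>j\<in>Sp. (\<Sum>k\<in>J. f (R k) * b k j) = 0"
    proof (intro ballI)
      fix j assume s: "(\<Sum>k\<in>J. vscale (f (R k)) (R k)) = 0" and j: "j \<in> Sp"
      have "0 = (\<Sum>k\<in>J. vscale (f (R k)) (R k)) j" using s by simp
      also have "\<dots> = (\<Sum>k\<in>J. f (R k) * b k j)" by (simp add: sum_fun_apply vscale_apply Rj[OF j])
      finally show "(\<Sum>k\<in>J. f (R k) * b k j) = 0" by simp
    qed
    then have "\<forall>k\<in>J. f (R k) = 0" by (rule key)
    then show "f y = 0" using y by auto
  qed
  have Rsub: "R ` J \<subseteq> VS.span (delta ` Sp)"
  proof
    fix y assume "y \<in> R ` J"
    then obtain k where y: "y = R k" by auto
    have "y = (\<Sum>j\<in>Sp. vscale (b k j) (delta j))" unfolding y R_def by (rule restr_expand[OF finSp])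
    also have "\<dots> \<in> VS.span (delta ` Sp)" by (intro VS.span_sum VS.span_scale VS.span_base imageI)
    finally show "y \<in> VS.span (delta ` Sp)" .
  qed
  have "card (R ` J) \<le> card (delta ` Sp)"
    using VS.independent_span_bound[OF _ indep Rsub] finSp by simp
  also have "\<dots> \<le> card Sp" by (rule card_image_le[OF finSp])
  finally have cJ: "card J \<le> card Sp" using card_image[OF Rinj] by simp
  have DKeq: "{N' \<in> Delta m s. \<exists>M\<in>K. mdvd N' M} = N ` J"
  proof
    show "{N' \<in> Delta m s. \<exists>M\<in>K. mdvd N' M} \<subseteq> N ` J"
    proof
      fix x assume x: "x \<in> {N' \<in> Delta m s. \<exists>M\<in>K. mdvd N' M}"
      then have "x \<in> N ` {1..n}" using N_img by auto
      then obtain k where k: "k \<in> {1..n}" "x = N k" by auto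
      then have "k \<in> J" using x by (auto simp: J_def K_def)
      then show "x \<in> N ` J" using k by auto
    qed
    show "N ` J \<subseteq> {N' \<in> Delta m s. \<exists>M\<in>K. mdvd N' M}"
      using N_mem by (auto simp: J_def K_def)
  qed
  have "DKperp m s K = card J"
    unfolding DKperp_def DKeq by (rule card_image) (rule inj_on_subset[OF N_inj J1])
  then have "DKperp m s K \<le> card (supp U)" using cJ by (simp add: Sp_def)
  moreover have "K \<subseteq> N ` {1..up} - L2"
  proof
    fix x assume "x \<in> K"
    then obtain h where h: "h \<in> H'" "x = N h" by (auto simp: K_def)
    then have "h \<in> {1..n} \<and> h \<le> up \<and> N h \<notin> L2" using Hprop H' by auto
    then show "x \<in> N ` {1..up} - L2" using h by auto
  qed
  moreover have "card K = v" unfolding K_def using card_image[OF inj_on_subset[OF N_inj H'1]] H'(2) by simp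
  ultimately show ?thesis unfolding up_def by blast
qed

end



context evs begin

lemma dot_sum_left: "dot (\<Sum>i\<in>I. vscale (f i) (y i)) x = (\<Sum>i\<in>I. f i * dot (y i) x)"
proof -
  have "dot (\<Sum>i\<in>I. vscale (f i) (y i)) x = (\<Sum>j<n. (\<Sum>i\<in>I. f i * y i j) * x j)"
    by (simp add: dot_def sum_fun_apply vscale_apply)
  also have "\<dots> = (\<Sum>j<n. \<Sum>i\<in>I. f i * (y i j * x j))" by (simp add: sum_distrib_right mult.assoc)
  also have "\<dots> = (\<Sum>i\<in>I. \<Sum>j<n. f i * (y i j * x j))" by (rule sum.swap)
  also have "\<dots> = (\<Sum>i\<in>I. f i * dot (y i) x)" by (simp add: dot_def sum_distrib_left)
  finally show ?thesis .
qed

lemma subspace_dual: "VS.subspace (dual n C)"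
proof (rule VS.subspaceI)
  show "0 \<in> dual n C" by (simp add: dual_def Vn_def)
next
  fix x y assume x: "x \<in> dual n C" and y: "y \<in> dual n C"
  then show "x + y \<in> dual n C"
    by (auto simp: dual_def Vn_def distrib_right sum.distrib)
next
  fix c x assume x: "x \<in> dual n C"
  then show "vscale c x \<in> dual n C"
    by (auto simp: dual_def Vn_def vscale_apply mult.assoc sum_distrib_left[symmetric])
qed

lemma supp_le: "U \<subseteq> Vn n \<Longrightarrow> card (supp U) \<le> n"
proof -
  assume U: "U \<subseteq> Vn n"
  have "card (supp U) \<le> card {..<n}" by (rule card_mono[OF finite_lessThan supp_Vn[OF U]])
  then show ?thesis by simp
qed

lemma exists_primal:
  assumes L: "L2 \<subset> L1" "L1 \<subseteq> Delta m s" and v: "v \<le> card L1 - card L2"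
  shows "\<exists>U. VS.subspace U \<and> U \<subseteq> evcode m n alpha L1 \<and> fdim U = v \<and> U \<inter> evcode m n alpha L2 = {0}"
proof -
  have L2D: "L2 \<subseteq> Delta m s" using L by auto
  have "card (idx (L1 - L2)) = card L1 - card L2"
    using card_idx[of "L1 - L2"] L card_Diff_subset[of L2 L1] finite_subset[OF L(2) finite_Delta]
    by (metis Diff_subset finite_subset psubset_imp_subset subset_trans)
  then obtain I0 where I0: "I0 \<subseteq> idx (L1 - L2)" "card I0 = v" "finite I0"
    using obtain_subset_with_card_n[of v "idx (L1 - L2)"] v by metis
  have I01: "I0 \<subseteq> {1..n}" using I0 by (auto simp: idx_def)
  define U where "U = VS.span (b ` I0)"
  have "VS.subspace U" by (simp add: U_def)
  moreover have "U \<subseteq> evcode m n alpha L1"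
    unfolding U_def evcode_eq ev_L[OF L(2)] using I0 by (intro VS.span_mono image_mono) (auto simp: idx_def)
  moreover have "fdim U = v"
  proof -
    have "VS.independent (b ` I0)" using ev_indep B_eq I01 by (metis VS.independent_mono image_mono)
    then have "fdim U = card (b ` I0)" unfolding U_def by (rule VS.dim_span_eq_card_independent)
    also have "\<dots> = card I0" by (rule card_image[OF inj_on_subset[OF b_inj I01]])
    finally show ?thesis using I0 by simp
  qed
  moreover have "U \<inter> evcode m n alpha L2 = {0}"
  proof
    show "{0} \<subseteq> U \<inter> evcode m n alpha L2" by (simp add: U_def evcode_eq VS.span_zero)
    show "U \<inter> evcode m n alpha L2 \<subseteq> {0}"
    proof
      fix x assume x: "x \<in> U \<inter> evcode m n alpha L2"
      have x1: "x \<in> VS.span (b ` I0)" using x by (simp add: U_def)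
      have x2: "x \<in> VS.span (b ` idx L2)" using x evcode_eq ev_L[OF L2D] by simp
      have xB: "x \<in> VS.span BB" using x2 B_eq idx_sub by (metis VS.span_mono image_mono subsetD)
      have "co x k = 0" if k: "k \<in> {1..n}" for k
      proof (cases "k \<in> I0")
        case True
        then have "k \<notin> idx L2" using I0 by (auto simp: idx_def)
        then show ?thesis using span_idx_coeff[OF idx_sub x2] k by auto
      next
        case False then show ?thesis using span_idx_coeff[OF I01 x1] k by auto
      qed
      then have "x = 0" by (rule co_zero[OF xB])
      then show "x \<in> {0}" by simp
    qed
  qed
  ultimately show ?thesis by blast
qed

lemma exists_dual:
  assumes L: "L2 \<subset> L1" "L1 \<subseteq> Delta m s" and v: "v \<le> card L1 - card L2"
  shows "\<exists>U. VS.subspace U \<and> U \<subseteq> dual n (evcode m n alpha L2) \<and> fdim U = v \<and> U \<inter> dual n (evcode m n alpha L1) = {0}"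
proof -
  have L2D: "L2 \<subseteq> Delta m s" using L by auto
  have "card (idx (L1 - L2)) = card L1 - card L2"
    using card_idx[of "L1 - L2"] L card_Diff_subset[of L2 L1] finite_subset[OF L(2) finite_Delta]
    by (metis Diff_subset finite_subset psubset_imp_subset subset_trans)
  then obtain I0 where I0: "I0 \<subseteq> idx (L1 - L2)" "card I0 = v" "finite I0"
    using obtain_subset_with_card_n[of v "idx (L1 - L2)"] v by metis
  have I01: "I0 \<subseteq> {1..n}" using I0 by (auto simp: idx_def)
  obtain d where d: "\<forall>i\<in>{1..n}. d i \<in> Vn n \<and> (\<forall>k\<in>{1..n}. dot (d i) (b k) = (if k = i then 1 else 0))"
    using dual_basis by blast
  have dinj: "inj_on d I0"
  proof (rule inj_onI)
    fix i i' assume i: "i \<in> I0" "i' \<in> I0" "d i = d i'"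
    have i1: "i \<in> {1..n}" "i' \<in> {1..n}" using i(1,2) I01 by auto
    have "dot (d i) (b i) = 1" using d i1 by auto
    moreover have "dot (d i') (b i) = (if i = i' then 1 else 0)" using d i1 by auto
    ultimately show "i = i'" using i(3) by (auto split: if_splits)
  qed
  define U where "U = VS.span (d ` I0)"
  have "VS.subspace U" by (simp add: U_def)
  moreover have "U \<subseteq> dual n (evcode m n alpha L2)"
    unfolding U_def
  proof (rule VS.span_minimal[OF _ subspace_dual])
    show "d ` I0 \<subseteq> dual n (evcode m n alpha L2)"
    proof
      fix y assume "y \<in> d ` I0"
      then obtain i where i: "i \<in> I0" "y = d i" by auto
      have i1: "i \<in> {1..n}" using i I01 by auto
      have "i \<notin> idx L2" using i I0 by (auto simp: idx_def)
      have "dot (d i) x = 0" if x: "x \<in> evcode m n alpha L2" for x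
      proof -
        have x2: "x \<in> VS.span (b ` idx L2)" using x evcode_eq ev_L[OF L2D] by simp
        show ?thesis
        proof (rule dot_span[OF x2])
          fix a assume "a \<in> b ` idx L2"
          then obtain k where k: "k \<in> idx L2" "a = b k" by auto
          have "k \<noteq> i" using k \<open>i \<notin> idx L2\<close> by auto
          moreover have "k \<in> {1..n}" using k(1) by (simp add: idx_def)
          ultimately show "dot (d i) a = 0" using d i1 k(2) by auto
        qed
      qed
      then show "y \<in> dual n (evcode m n alpha L2)" using d i1 i by (simp add: dual_iff)
    qed
  qed
  moreover have "fdim U = v"
  proof -
    have "VS.independent (d ` I0)"
    proof (rule VS.independent_if_scalars_zero)
      show "finite (d ` I0)" using I0 by simp
    next
      fix f y assume s: "(\<Sum>x\<in>d ` I0. vscale (f x) x) = 0" and y: "y \<in> d ` I0"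
      then obtain k where k: "k \<in> I0" "y = d k" by auto
      have k1: "k \<in> {1..n}" using k I01 by auto
      have "(\<Sum>i\<in>I0. vscale (f (d i)) (d i)) = 0"
        using s sum.reindex[OF dinj, of "\<lambda>x. vscale (f x) x"] by simp
      then have "0 = dot (\<Sum>i\<in>I0. vscale (f (d i)) (d i)) (b k)" by (simp add: dot_def)
      also have "\<dots> = (\<Sum>i\<in>I0. f (d i) * dot (d i) (b k))" by (rule dot_sum_left)
      also have "\<dots> = (\<Sum>i\<in>I0. if i = k then f (d k) else 0)"
        by (rule sum.cong) (use d I01 k1 in auto)
      also have "\<dots> = f (d k)" using k I0 by simp
      finally show "f y = 0" using k by simp
    qed
    then have "fdim U = card (d ` I0)" unfolding U_def by (rule VS.dim_span_eq_card_independent)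
    also have "\<dots> = card I0" by (rule card_image[OF dinj])
    finally show ?thesis using I0 by simp
  qed
  moreover have "U \<inter> dual n (evcode m n alpha L1) = {0}"
  proof
    show "{0} \<subseteq> U \<inter> dual n (evcode m n alpha L1)"
      using VS.subspace_0[OF subspace_dual] by (simp add: U_def VS.span_zero)
    show "U \<inter> dual n (evcode m n alpha L1) \<subseteq> {0}"
    proof
      fix x assume x: "x \<in> U \<inter> dual n (evcode m n alpha L1)"
      have finI: "finite (d ` I0)" using I0 by simp
      obtain u where u: "x = (\<Sum>y\<in>d ` I0. vscale (u y) y)" using x VS.span_finite[OF finI] by (auto simp: U_def)
      have xe: "x = (\<Sum>i\<in>I0. vscale (u (d i)) (d i))" using u sum.reindex[OF dinj, of "\<lambda>y. vscale (u y) y"] by simp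
      have uz: "u (d k) = 0" if k: "k \<in> I0" for k
      proof -
        have k1: "k \<in> {1..n}" using k I01 by auto
        have "N k \<in> L1" using k I0 by (auto simp: idx_def)
        then have "b k \<in> evcode m n alpha L1" unfolding evcode_eq b_def by (intro VS.span_base imageI)
        then have "0 = dot x (b k)" using x by (simp add: dual_iff)
        also have "\<dots> = (\<Sum>i\<in>I0. u (d i) * dot (d i) (b k))" unfolding xe by (rule dot_sum_left)
        also have "\<dots> = (\<Sum>i\<in>I0. if i = k then u (d k) else 0)"
          by (rule sum.cong) (use d I01 k1 in auto)
        also have "\<dots> = u (d k)" using k I0 by simp
        finally show ?thesis by simp
      qed
      have "x = (\<Sum>i\<in>I0. vscale 0 (d i))" unfolding xe by (rule sum.cong) (simp_all add: uz)
      then show "x \<in> {0}" by simp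
    qed
  qed
  ultimately show ?thesis by blast
qed

lemma DK_le: "DK m s K \<le> n"
  unfolding DK_def using card_mono[OF finite_Delta] card_Delta by (metis (no_types, lifting) mem_Collect_eq subsetI)

lemma DKperp_le: "DKperp m s K \<le> n"
  unfolding DKperp_def using card_mono[OF finite_Delta] card_Delta by (metis (no_types, lifting) mem_Collect_eq subsetI)

end

theorem mainTheorem1:
  fixes m n :: nat
    and s :: "nat \<Rightarrow> nat"
    and S :: "nat \<Rightarrow> 'a::{finite,field} set"
    and alpha :: "nat \<Rightarrow> nat \<Rightarrow> 'a"
    and lt :: "(nat \<Rightarrow> nat) \<Rightarrow> (nat \<Rightarrow> nat) \<Rightarrow> bool"
    and N :: "nat \<Rightarrow> (nat \<Rightarrow> nat)"
    and L1 L2 :: "(nat \<Rightarrow> nat) set"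
  assumes S_ne: "\<forall>i<m. S i \<noteq> {}"
    and s_def: "\<forall>i<m. s i = card (S i)"
    and n_def: "n = (\<Prod>i<m. s i)"
    and alpha_enum: "bij_betw alpha {..<n} (PiE {..<m} S)"
    and mono_ord: "monomial_order m lt"
    and N_enum: "bij_betw N {1..n} (Delta m s)"
    and N_sorted: "\<forall>i\<in>{1..n}. \<forall>j\<in>{1..n}. i < j \<longrightarrow> lt (N i) (N j)"
    and L2_L1: "L2 \<subset> L1"
    and L1_Delta: "L1 \<subseteq> Delta m s"
  shows "evcode m n alpha L1 \<subseteq> Vn n \<and> evcode m n alpha L2 \<subseteq> Vn n
       \<and> evcode m n alpha L2 \<subset> evcode m n alpha L1
       \<and> int (fdim (evcode m n alpha L1)) - int (fdim (evcode m n alpha L2))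
           = int (card L1) - int (card L2)
       \<and> (let u = Min {i \<in> {1..n}. N i \<in> L1 - L2};
              uperp = Max {i \<in> {1..n}. N i \<in> L1}
          in \<forall>v \<in> {1..card L1 - card L2}.
               RGHW n v (evcode m n alpha L1) (evcode m n alpha L2)
                 \<ge> Min {DK m s K | K. K \<subseteq> N ` {u..n} \<inter> L1 \<and> card K = v}
             \<and> RGHW n v (dual n (evcode m n alpha L2)) (dual n (evcode m n alpha L1))
                 \<ge> Min {DKperp m s K | K. K \<subseteq> N ` {1..uperp} - L2 \<and> card K = v})"
proof -
  interpret E: evs m n s S alpha lt N
    using S_ne s_def n_def alpha_enum mono_ord N_enum N_sorted by unfold_locales auto
  have L2D: "L2 \<subseteq> Delta m s" using L2_L1 L1_Delta by auto
  have part1: "evcode m n alpha L1 \<subseteq> Vn n" "evcode m n alpha L2 \<subseteq> Vn n" by (rule E.evcode_Vn)+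
  have part2: "evcode m n alpha L2 \<subset> evcode m n alpha L1" by (rule E.evcode_strict[OF L2_L1 L1_Delta])
  have part3: "int (fdim (evcode m n alpha L1)) - int (fdim (evcode m n alpha L2)) = int (card L1) - int (card L2)"
    using E.dim_evcode[OF L1_Delta] E.dim_evcode[OF L2D] by simp
  define u where "u = Min {i \<in> {1..n}. N i \<in> L1 - L2}"
  define up where "up = Max {i \<in> {1..n}. N i \<in> L1}"
  have part4: "RGHW n v (evcode m n alpha L1) (evcode m n alpha L2) \<ge> Min {DK m s K | K. K \<subseteq> N ` {u..n} \<inter> L1 \<and> card K = v}
     \<and> RGHW n v (dual n (evcode m n alpha L2)) (dual n (evcode m n alpha L1)) \<ge> Min {DKperp m s K | K. K \<subseteq> N ` {1..up} - L2 \<and> card K = v}"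
    if v: "v \<in> {1..card L1 - card L2}" for v
  proof
    let ?B = "{DK m s K | K. K \<subseteq> N ` {u..n} \<inter> L1 \<and> card K = v}"
    let ?S = "{card (supp U) | U. fsubspace U \<and> U \<subseteq> evcode m n alpha L1 \<and> fdim U = v \<and> U \<inter> evcode m n alpha L2 = {0}}"
    have "?B \<subseteq> {..n}"
    proof
      fix x assume "x \<in> ?B" then obtain K where "x = DK m s K" by blast
      then show "x \<in> {..n}" using E.DK_le[of K] by simp
    qed
    then have finB: "finite ?B" by (rule finite_subset) simp
    have "?S \<subseteq> {..n}"
    proof
      fix x assume "x \<in> ?S" then obtain U where "x = card (supp U)" "U \<subseteq> evcode m n alpha L1" by blast
      then show "x \<in> {..n}" using E.supp_le[of U] part1 by auto
    qed
    then have finS: "finite ?S" by (rule finite_subset) simp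
    have neS: "?S \<noteq> {}" using E.exists_primal[OF L2_L1 L1_Delta, of v] v by auto
    have "Min ?B \<le> x" if x: "x \<in> ?S" for x
    proof -
      obtain U where U: "x = card (supp U)" "fsubspace U" "U \<subseteq> evcode m n alpha L1" "fdim U = v" "U \<inter> evcode m n alpha L2 = {0}"
        using x by blast
      obtain K where K: "K \<subseteq> N ` {u..n} \<inter> L1" "card K = v" "DK m s K \<le> card (supp U)"
        using E.primal[OF L2_L1 L1_Delta U(2) U(3) U(5), of v] U(4) by (auto simp: u_def)
      have "Min ?B \<le> DK m s K" using K by (intro Min_le[OF finB]) blast
      then show ?thesis using K U by simp
    qed
    then show "Min ?B \<le> RGHW n v (evcode m n alpha L1) (evcode m n alpha L2)"
      unfolding RGHW_def using finS neS by (simp add: Min_ge_iff)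
  next
    let ?B = "{DKperp m s K | K. K \<subseteq> N ` {1..up} - L2 \<and> card K = v}"
    let ?S = "{card (supp U) | U. fsubspace U \<and> U \<subseteq> dual n (evcode m n alpha L2) \<and> fdim U = v \<and> U \<inter> dual n (evcode m n alpha L1) = {0}}"
    have dV: "dual n (evcode m n alpha L2) \<subseteq> Vn n" by (auto simp: dual_def)
    have "?B \<subseteq> {..n}"
    proof
      fix x assume "x \<in> ?B" then obtain K where "x = DKperp m s K" by blast
      then show "x \<in> {..n}" using E.DKperp_le[of K] by simp
    qed
    then have finB: "finite ?B" by (rule finite_subset) simp
    have "?S \<subseteq> {..n}"
    proof
      fix x assume "x \<in> ?S" then obtain U where "x = card (supp U)" "U \<subseteq> dual n (evcode m n alpha L2)" by blast
      then show "x \<in> {..n}" using E.supp_le[of U] dV by auto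
    qed
    then have finS: "finite ?S" by (rule finite_subset) simp
    have neS: "?S \<noteq> {}" using E.exists_dual[OF L2_L1 L1_Delta, of v] v by auto
    have "Min ?B \<le> x" if x: "x \<in> ?S" for x
    proof -
      obtain U where U: "x = card (supp U)" "fsubspace U" "U \<subseteq> dual n (evcode m n alpha L2)" "fdim U = v" "U \<inter> dual n (evcode m n alpha L1) = {0}"
        using x by blast
      obtain K where K: "K \<subseteq> N ` {1..up} - L2" "card K = v" "DKperp m s K \<le> card (supp U)"
        using E.dualb[OF L2_L1 L1_Delta U(2) U(3) U(5), of v] U(4) by (auto simp: up_def)
      have "Min ?B \<le> DKperp m s K" using K by (intro Min_le[OF finB]) blast
      then show ?thesis using K U by simp
    qed
    then show "Min ?B \<le> RGHW n v (dual n (evcode m n alpha L2)) (dual n (evcode m n alpha L1))"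
      unfolding RGHW_def using finS neS by (simp add: Min_ge_iff)
  qed
  show ?thesis using part1 part2 part3 part4 unfolding Let_def u_def up_def by blast
qed



end
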